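(* Let $L>0$, $V\in C^1([0,L];\mathbb{R})$ and $V_\varepsilon\in C^1([0,L];\mathbb{R})$ ($\varepsilon\in(0,1]$) with $\|V-V_\varepsilon\|_{C^1}\to0$ as $\varepsilon\to0^+$; assume the only $x\in[0,L]$ with $V'(x)=0$ is $\mathbf{x}_0\in(0,L)$ and $V(\mathbf{x}_0)=\min_{[0,L]}V$. Then there is $D>0$ such that for any $\mathbf{y}_0\in[0,L]$ and any $\delta>0$ there is $\varepsilon_0>0$ such that for all $E\in\mathbb{R}$, $\varepsilon\in(0,\varepsilon_0)$ and $\psi$ satisfying $-\varepsilon^2\psi''+V_\varepsilon\psi=E\psi$, $\psi\in H^2(0,L)\cap H^1_0(0,L)$, $\|\psi\|_{L^2(0,L)}=1$, we have $$\|\psi\|_{L^2(U)}\ge e^{-\frac1\varepsilon(d_{A,E}(\mathbf{y}_0)+D\delta)},\qquad U=(\mathbf{y}_0-\delta,\mathbf{y}_0+\delta)\cap[0,L],$$ and $$\frac{\varepsilon}{\sqrt{|E|+1}}|\psi'(0)|\ge e^{-\frac1\varepsilon(d_{A,E}(0)+\delta)},\qquad\frac{\varepsilon}{\sqrt{|E|+1}}|\psi'(L)|\ge e^{-\frac1\varepsilon(d_{A,E}(L)+\delta)}.$$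
   Context: $E_0=\min V$. For $E\ge E_0$, $K_E=\{x\in[0,L]:V(x)\le E\}$ and $d_{A,E}(x)=\inf_{y\in K_E}\left|\int_y^x\sqrt{(V(s)-E)_+}ds\right|$; for $E<E_0$, $d_{A,E}:=d_{A,E_0}$. *)

theory Defs
  imports "HOL-Analysis.Analysis"
begin

definition C1_on :: "real \<Rightarrow> (real \<Rightarrow> real) \<Rightarrow> (real \<Rightarrow> real) \<Rightarrow> bool" where
  "C1_on L f f' \<longleftrightarrow> continuous_on {0..L} f' \<and>
     (\<forall>x\<in>{0..L}. (f has_real_derivative f' x) (at x within {0..L}))"

definition C1_dist :: "real \<Rightarrow> (real \<Rightarrow> real) \<Rightarrow> (real \<Rightarrow> real) \<Rightarrow> (real \<Rightarrow> real) \<Rightarrow> (real \<Rightarrow> real) \<Rightarrow> real" where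
  "C1_dist L f f' g g' = (SUP x\<in>{0..L}. \<bar>f x - g x\<bar>) + (SUP x\<in>{0..L}. \<bar>f' x - g' x\<bar>)"

definition E0 :: "real \<Rightarrow> (real \<Rightarrow> real) \<Rightarrow> real" where
  "E0 L V = (INF x\<in>{0..L}. V x)"

definition KE :: "real \<Rightarrow> (real \<Rightarrow> real) \<Rightarrow> real \<Rightarrow> real set" where
  "KE L V E = {x\<in>{0..L}. V x \<le> E}"

text \<open>Agmon distance d_{A,E}(x) = inf_{y in K_E} |int_y^x sqrt((V-E)_+)|, and d_{A,E} := d_{A,E_0}
  for E < E_0. Since the integrand is nonnegative, |int_y^x| is the integral over [min x y, max x y].\<close>
definition agmon :: "real \<Rightarrow> (real \<Rightarrow> real) \<Rightarrow> real \<Rightarrow> real \<Rightarrow> real" where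
  "agmon L V E x =
     (let E' = max E (E0 L V) in
      INF y\<in>KE L V E'. integral {min y x..max y x} (\<lambda>s. sqrt (max (V s - E') 0)))"

text \<open>psi in H^2(0,L): psi is C^1 on [0,L] with derivative psi1 (H^2 embeds into C^1 in 1D),
  psi1 is absolutely continuous with weak derivative psi2, and psi2 is in L^2(0,L).\<close>
definition H2_on :: "real \<Rightarrow> (real \<Rightarrow> complex) \<Rightarrow> (real \<Rightarrow> complex) \<Rightarrow> (real \<Rightarrow> complex) \<Rightarrow> bool" where
  "H2_on L \<psi> \<psi>1 \<psi>2 \<longleftrightarrow>
     continuous_on {0..L} \<psi>1 \<and>
     (\<forall>x\<in>{0..L}. (\<psi> has_vector_derivative \<psi>1 x) (at x within {0..L})) \<and>
     set_borel_measurable lebesgue {0..L} \<psi>2 \<and>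
     set_integrable lebesgue {0..L} (\<lambda>x. (cmod (\<psi>2 x))\<^sup>2) \<and>
     (\<forall>x\<in>{0..L}. (\<psi>2 has_integral (\<psi>1 x - \<psi>1 0)) {0..x})"

definition L2norm :: "real set \<Rightarrow> (real \<Rightarrow> complex) \<Rightarrow> real" where
  "L2norm U \<psi> = sqrt (LINT x:U|lebesgue. (cmod (\<psi> x))\<^sup>2)"

end

theory Submission imports Defs begin

lemma Re_deriv:
  assumes "(f has_vector_derivative f') (at x within S)"
  shows "((\<lambda>t. Re (f t)) has_real_derivative Re f') (at x within S)"
proof -
  have "((\<lambda>t. Re (f t)) has_derivative (\<lambda>h. Re (h *\<^sub>R f'))) (at x within S)"
    using bounded_linear.has_derivative[OF bounded_linear_Re assms[unfolded has_vector_derivative_def]] .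
  moreover have "(\<lambda>h. Re (h *\<^sub>R f')) = (*) (Re f')" by (auto simp: fun_eq_iff)
  ultimately show ?thesis unfolding has_field_derivative_def by simp
qed

lemma Im_deriv:
  assumes "(f has_vector_derivative f') (at x within S)"
  shows "((\<lambda>t. Im (f t)) has_real_derivative Im f') (at x within S)"
proof -
  have "((\<lambda>t. Im (f t)) has_derivative (\<lambda>h. Im (h *\<^sub>R f'))) (at x within S)"
    using bounded_linear.has_derivative[OF bounded_linear_Im assms[unfolded has_vector_derivative_def]] .
  moreover have "(\<lambda>h. Im (h *\<^sub>R f')) = (*) (Im f')" by (auto simp: fun_eq_iff)
  ultimately show ?thesis unfolding has_field_derivative_def by simp
qed

lemma mono_deriv:
  fixes f f' :: "real \<Rightarrow> real"
  assumes "a \<le> b" "\<And>t. t \<in> {a..b} \<Longrightarrow> (f has_real_derivative f' t) (at t within {a..b})"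
    "\<And>t. t \<in> {a..b} \<Longrightarrow> f' t \<ge> 0"
  shows "f a \<le> f b"
proof (cases "a = b")
  case False
  then have "a < b" using assms by simp
  from mvt_simple[OF this, of f "\<lambda>t. (*) (f' t)"] assms(2)
  obtain x where "x \<in> {a<..<b}" "f b - f a = f' x * (b - a)"
    by (auto simp: has_field_derivative_def mult.commute)
  moreover have "f' x \<ge> 0" using assms(3) \<open>x \<in> _\<close> by auto
  ultimately show ?thesis using \<open>a < b\<close> by (smt (verit) mult_nonneg_nonneg)
qed simp

lemma gronwall2:
  fixes G G' R r :: "real \<Rightarrow> real"
  assumes dG: "\<And>t. t \<in> {0..L} \<Longrightarrow> (G has_real_derivative G' t) (at t within {0..L})"
    and dR: "\<And>t. t \<in> {0..L} \<Longrightarrow> (R has_real_derivative r t) (at t within {0..L})"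
    and bd: "\<And>t. t \<in> {0..L} \<Longrightarrow> \<bar>G' t\<bar> \<le> r t * G t"
    and pos: "\<And>t. t \<in> {0..L} \<Longrightarrow> G t \<ge> 0"
    and x: "x \<in> {0..L}" and y: "y \<in> {0..L}"
  shows "G y * exp (- \<bar>R x - R y\<bar>) \<le> G x"
proof (cases "y \<le> x")
  case True
  have "G y * exp (R y) \<le> G x * exp (R x)"
  proof (rule mono_deriv[OF True, where f' = "\<lambda>t. (G' t + r t * G t) * exp (R t)"])
    fix t assume t: "t \<in> {y..x}"
    then have t0: "t \<in> {0..L}" using x y by auto
    have e: "((\<lambda>t. exp (R t)) has_real_derivative exp (R t) * r t) (at t within {0..L})"
      by (rule DERIV_chain'[OF dR[OF t0] DERIV_exp])
    have "((\<lambda>t. G t * exp (R t)) has_real_derivative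
       (G' t * exp (R t) + G t * (exp (R t) * r t))) (at t within {0..L})"
      using DERIV_mult'[OF dG[OF t0] e] by (simp add: algebra_simps)
    then show "((\<lambda>t. G t * exp (R t)) has_real_derivative (G' t + r t * G t) * exp (R t)) (at t within {y..x})"
      by (rule DERIV_subset[THEN DERIV_cong]) (use x y in \<open>auto simp: algebra_simps\<close>)
    show "(G' t + r t * G t) * exp (R t) \<ge> 0"
      using bd[OF t0] by (intro mult_nonneg_nonneg) auto
  qed
  then have "G y * exp (R y - R x) \<le> G x"
    by (simp add: exp_diff divide_le_eq)
  moreover have "G y * exp (- \<bar>R x - R y\<bar>) \<le> G y * exp (R y - R x)"
    using pos[OF y] by (intro mult_left_mono) auto
  ultimately show ?thesis by linarith
next
  case False
  then have le: "x \<le> y" by simp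
  have "- (G x * exp (- R x)) \<le> - (G y * exp (- R y))"
  proof (rule mono_deriv[OF le, where f' = "\<lambda>t. - ((G' t - r t * G t) * exp (- R t))"])
    fix t assume t: "t \<in> {x..y}"
    then have t0: "t \<in> {0..L}" using x y by auto
    have e: "((\<lambda>t. exp (- R t)) has_real_derivative exp (- R t) * (- r t)) (at t within {0..L})"
      by (rule DERIV_chain'[OF DERIV_minus[OF dR[OF t0]] DERIV_exp])
    have "((\<lambda>t. - (G t * exp (- R t))) has_real_derivative
       - (G' t * exp (- R t) + G t * (exp (- R t) * - r t))) (at t within {0..L})"
      using DERIV_minus[OF DERIV_mult'[OF dG[OF t0] e]] by (simp add: algebra_simps)
    then show "((\<lambda>t. - (G t * exp (- R t))) has_real_derivative - ((G' t - r t * G t) * exp (- R t))) (at t within {x..y})"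
      by (rule DERIV_subset[THEN DERIV_cong]) (use x y in \<open>auto simp: algebra_simps\<close>)
    have "(G' t - r t * G t) * exp (- R t) \<le> 0"
      using bd[OF t0] by (intro mult_nonpos_nonneg) auto
    then show "- ((G' t - r t * G t) * exp (- R t)) \<ge> 0" by simp
  qed
  then have "G y * exp (R x - R y) \<le> G x"
    by (simp add: exp_diff exp_minus field_simps)
  moreover have "G y * exp (- \<bar>R x - R y\<bar>) \<le> G y * exp (R x - R y)"
    using pos[OF y] by (intro mult_left_mono) auto
  ultimately show ?thesis by linarith
qed

lemma deriv_bound_real:
  fixes f f' :: "real \<Rightarrow> real"
  assumes "a \<le> b" "\<And>t. t \<in> {a..b} \<Longrightarrow> (f has_real_derivative f' t) (at t within {a..b})"
    "\<And>t. t \<in> {a..b} \<Longrightarrow> \<bar>f' t\<bar> \<le> B"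
  shows "\<bar>f b - f a\<bar> \<le> B * (b - a)"
proof (cases "a = b")
  case False
  then have "a < b" using assms by simp
  from mvt_simple[OF this, of f "\<lambda>t. (*) (f' t)"] assms(2)
  obtain x where "x \<in> {a<..<b}" "f b - f a = f' x * (b - a)"
    by (auto simp: has_field_derivative_def mult.commute)
  moreover have "\<bar>f' x\<bar> \<le> B" using assms(3) \<open>x \<in> _\<close> by auto
  ultimately show ?thesis using \<open>a < b\<close>
    by (simp add: abs_mult mult_right_mono)
qed simp

lemma quad_ineq:
  fixes u v :: real
  shows "u\<^sup>2 + u * v + v\<^sup>2 / 3 \<ge> (u\<^sup>2 + v\<^sup>2) / 16"
proof -
  have "0 \<le> 15/16 * (u + 8/15 * v)\<^sup>2 + (13/48 - 4/15) * v\<^sup>2"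
    by (intro add_nonneg_nonneg mult_nonneg_nonneg) auto
  then show ?thesis by (simp add: power2_eq_square algebra_simps)
qed

lemma aux_lin: "(0::real) \<le> Y \<Longrightarrow> Y / 16 \<le> X \<Longrightarrow> k \<le> 2 * Y / 225 \<Longrightarrow> Y / 64 \<le> X / 2 - k"
  by linarith

lemma local_mass:
  fixes c cd cdd :: "real \<Rightarrow> real" and x h \<Lambda> :: real
  assumes h: "h > 0" and L0: "0 \<le> \<Lambda>" and L1: "\<Lambda> \<le> 1/16"
    and dc: "\<And>t. t \<in> {x..x+h} \<Longrightarrow> (c has_real_derivative cd t) (at t within {x..x+h})"
    and dc1: "\<And>t. t \<in> {x..x+h} \<Longrightarrow> (cd has_real_derivative cdd t) (at t within {x..x+h})"
    and bd: "\<And>t. t \<in> {x..x+h} \<Longrightarrow> \<bar>cdd t\<bar> \<le> \<Lambda> / h\<^sup>2 * \<bar>c t\<bar>"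
  shows "integral {x..x+h} (\<lambda>t. (c t)\<^sup>2) \<ge> h / 64 * ((c x)\<^sup>2 + h\<^sup>2 * (cd x)\<^sup>2)"
proof -
  have cont: "continuous_on {x..x+h} c"
    using dc by (meson DERIV_continuous continuous_on_eq_continuous_within)
  have "\<exists>tm\<in>{x..x+h}. \<forall>t\<in>{x..x+h}. \<bar>c t\<bar> \<le> \<bar>c tm\<bar>"
    using h by (intro continuous_attains_sup continuous_intros cont) auto
  then obtain tm where tm: "tm \<in> {x..x+h}" and tmax: "\<And>t. t \<in> {x..x+h} \<Longrightarrow> \<bar>c t\<bar> \<le> \<bar>c tm\<bar>"
    by blast
  define M where "M = \<bar>c tm\<bar>"
  define B where "B = \<Lambda> * M / h\<^sup>2"
  have B0: "B \<ge> 0" unfolding B_def M_def using L0 by simp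
  have c2B: "\<bar>cdd t\<bar> \<le> B" if "t \<in> {x..x+h}" for t
  proof -
    have "\<bar>cdd t\<bar> \<le> \<Lambda> / h\<^sup>2 * \<bar>c t\<bar>" using bd that .
    also have "\<dots> \<le> \<Lambda> / h\<^sup>2 * M" unfolding M_def using tmax[OF that] L0 h
      by (intro mult_left_mono) auto
    finally show ?thesis by (simp add: B_def)
  qed
  have d1: "\<bar>cd t - cd x\<bar> \<le> B * (t - x)" if "t \<in> {x..x+h}" for t
    using that
    by (intro deriv_bound_real[of x t cd cdd B])
       (auto intro: DERIV_subset[OF dc1] c2B)
  define g where "g t = c t - c x - (t - x) * cd x" for t
  have gb: "\<bar>g t\<bar> \<le> \<Lambda> * M" if t: "t \<in> {x..x+h}" for t
  proof -
    have "\<bar>g t - g x\<bar> \<le> (B * (t - x)) * (t - x)"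
    proof (rule deriv_bound_real[of x t g "\<lambda>s. cd s - cd x"])
      show "x \<le> t" using t by simp
      fix s assume s: "s \<in> {x..t}"
      then have s': "s \<in> {x..x+h}" using t by auto
      show "(g has_real_derivative cd s - cd x) (at s within {x..t})"
        unfolding g_def
        by (rule DERIV_subset[of _ _ _ "{x..x+h}"])
           (use s t in \<open>auto intro!: derivative_eq_intros dc[OF s']\<close>)
      show "\<bar>cd s - cd x\<bar> \<le> B * (t - x)"
      proof -
        have "B * (s - x) \<le> B * (t - x)" using s B0 by (intro mult_left_mono) auto
        then show ?thesis using d1[OF s'] by linarith
      qed
    qed
    moreover have "g x = 0" by (simp add: g_def)
    moreover have "(B * (t - x)) * (t - x) \<le> B * h * h"
      using t B0 by (intro mult_mono) auto
    moreover have "B * h * h = \<Lambda> * M" using h by (simp add: B_def power2_eq_square)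
    ultimately show ?thesis by simp
  qed
  define S1 where "S1 = \<bar>c x\<bar> + h * \<bar>cd x\<bar>"
  have "M \<le> S1 + \<Lambda> * M"
  proof -
    have "c tm = c x + (tm - x) * cd x + g tm" by (simp add: g_def)
    then have "M \<le> \<bar>c x\<bar> + \<bar>(tm - x) * cd x\<bar> + \<bar>g tm\<bar>" unfolding M_def by linarith
    moreover have "\<bar>(tm - x) * cd x\<bar> \<le> h * \<bar>cd x\<bar>" using tm by (simp add: abs_mult mult_right_mono)
    ultimately show ?thesis using gb[OF tm] unfolding S1_def by linarith
  qed
  then have "(1 - \<Lambda>) * M \<le> S1" by (simp add: algebra_simps)
  then have M15: "15 * M \<le> 16 * S1"
  proof -
    have "(15/16) * M \<le> (1 - \<Lambda>) * M" using L1 by (intro mult_right_mono) (auto simp: M_def)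
    then show ?thesis using \<open>(1 - \<Lambda>) * M \<le> S1\<close> by linarith
  qed
  have gS: "\<bar>g t\<bar> \<le> S1 / 15" if "t \<in> {x..x+h}" for t
  proof -
    have "\<Lambda> * M \<le> (1/16) * M" using L1 M_def by (intro mult_right_mono) auto
    then show ?thesis using gb[OF that] M15 by linarith
  qed
  define A where "A = c x"
  define Bc where "Bc = cd x"
  define k where "k = (S1 / 15)\<^sup>2"
  define \<phi> where "\<phi> t = (A + (t - x) * Bc)\<^sup>2 / 2 - k" for t
  define \<Phi> where "\<Phi> t = (A\<^sup>2 * (t - x) + A * Bc * (t - x)\<^sup>2 + Bc\<^sup>2 * (t - x)^3 / 3) / 2 - k * (t - x)" for t
  have "(\<phi> has_integral (\<Phi> (x+h) - \<Phi> x)) {x..x+h}"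
  proof (rule fundamental_theorem_of_calculus)
    fix t assume "t \<in> {x..x+h}"
    show "(\<Phi> has_vector_derivative \<phi> t) (at t within {x..x+h})"
      unfolding \<Phi>_def \<phi>_def has_real_derivative_iff_has_vector_derivative[symmetric]
      by (auto intro!: derivative_eq_intros simp: power2_eq_square field_simps)
  qed (use h in auto)
  moreover have "((\<lambda>t. (c t)\<^sup>2) has_integral integral {x..x+h} (\<lambda>t. (c t)\<^sup>2)) {x..x+h}"
    by (intro integrable_integral integrable_continuous_real continuous_intros cont)
  moreover have "\<phi> t \<le> (c t)\<^sup>2" if "t \<in> {x..x+h}" for t
  proof -
    have ct: "c t = (A + (t - x) * Bc) + g t" by (simp add: g_def A_def Bc_def)
    have "\<bar>g t\<bar>\<^sup>2 \<le> (S1/15)\<^sup>2" using gS[OF that] by (intro power_mono) auto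
    then have "(g t)\<^sup>2 \<le> k" unfolding k_def by simp
    moreover have "(A + (t - x) * Bc)\<^sup>2 \<le> 2 * (c t)\<^sup>2 + 2 * (g t)\<^sup>2"
    proof -
      have e: "A + (t - x) * Bc = c t - g t" using ct by simp
      have "2 * (c t)\<^sup>2 + 2 * (g t)\<^sup>2 - (c t - g t)\<^sup>2 = (c t + g t)\<^sup>2"
        by (simp add: power2_eq_square algebra_simps)
      moreover have "(c t + g t)\<^sup>2 \<ge> 0" by simp
      ultimately show ?thesis unfolding e by linarith
    qed
    ultimately show ?thesis unfolding \<phi>_def by linarith
  qed
  ultimately have I: "\<Phi> (x+h) - \<Phi> x \<le> integral {x..x+h} (\<lambda>t. (c t)\<^sup>2)"
    by (rule has_integral_le)
  have "\<Phi> (x+h) - \<Phi> x = h * (((A\<^sup>2 + A * (h * Bc) + (h*Bc)\<^sup>2 / 3)) / 2 - k)"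
    by (simp add: \<Phi>_def power2_eq_square power3_eq_cube algebra_simps)
  moreover have "(A\<^sup>2 + A * (h * Bc) + (h*Bc)\<^sup>2 / 3) \<ge> (A\<^sup>2 + (h*Bc)\<^sup>2) / 16"
    by (rule quad_ineq)
  moreover have "k \<le> 2 * (A\<^sup>2 + (h*Bc)\<^sup>2) / 225"
  proof -
    have "S1\<^sup>2 \<le> 2 * (A\<^sup>2 + (h*Bc)\<^sup>2)"
    proof -
      have e: "S1 = \<bar>A\<bar> + \<bar>h * Bc\<bar>" unfolding S1_def A_def Bc_def using h by (simp add: abs_mult)
      have "2 * (\<bar>A\<bar>\<^sup>2 + \<bar>h * Bc\<bar>\<^sup>2) - (\<bar>A\<bar> + \<bar>h * Bc\<bar>)\<^sup>2 = (\<bar>A\<bar> - \<bar>h * Bc\<bar>)\<^sup>2"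
        by (simp add: power2_eq_square algebra_simps)
      moreover have "(\<bar>A\<bar> - \<bar>h * Bc\<bar>)\<^sup>2 \<ge> 0" by simp
      ultimately show ?thesis unfolding e by (simp only: power2_abs)
    qed
    then show ?thesis unfolding k_def by (simp add: power_divide)
  qed
  ultimately have "\<Phi> (x+h) - \<Phi> x \<ge> h * ((A\<^sup>2 + (h*Bc)\<^sup>2) / 64)"
  proof -
    assume a1: "\<Phi> (x+h) - \<Phi> x = h * (((A\<^sup>2 + A * (h * Bc) + (h*Bc)\<^sup>2 / 3)) / 2 - k)"
      and a2: "(A\<^sup>2 + A * (h * Bc) + (h*Bc)\<^sup>2 / 3) \<ge> (A\<^sup>2 + (h*Bc)\<^sup>2) / 16"
      and a3: "k \<le> 2 * (A\<^sup>2 + (h*Bc)\<^sup>2) / 225"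
    have "0 \<le> A\<^sup>2 + (h*Bc)\<^sup>2" by simp
    then have "(A\<^sup>2 + (h*Bc)\<^sup>2) / 64 \<le> ((A\<^sup>2 + A * (h * Bc) + (h*Bc)\<^sup>2 / 3)) / 2 - k"
      using a2 a3 by (rule aux_lin)
    then show ?thesis unfolding a1 using h by (intro mult_left_mono) auto
  qed
  then show ?thesis using I by (simp add: A_def Bc_def power_mult_distrib algebra_simps add_divide_distrib)
qed

lemma pieces_sum:
  fixes P :: "real \<Rightarrow> real"
  assumes h: "h > 0" and cont: "continuous_on {s..s + real N * h} P"
    and piece: "\<And>i. i < N \<Longrightarrow> integral {s + real i * h .. s + real i * h + h} P \<ge> \<beta>"
  shows "integral {s..s + real N * h} P \<ge> real N * \<beta>"
  using cont piece
proof (induction N)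
  case 0
  then show ?case by simp
next
  case (Suc N)
  have e: "s + real (Suc N) * h = s + real N * h + h" by (simp add: algebra_simps)
  have c1: "continuous_on {s..s + real N * h} P"
    by (rule continuous_on_subset[OF Suc.prems(1)]) (use h in \<open>auto simp: algebra_simps\<close>)
  have IH: "integral {s..s + real N * h} P \<ge> real N * \<beta>"
    using Suc.IH[OF c1] Suc.prems(2) by auto
  have "integral {s..s + real N * h} P + integral {s + real N * h..s + real N * h + h} P
      = integral {s..s + real N * h + h} P"
  proof (rule Henstock_Kurzweil_Integration.integral_combine)
    show "P integrable_on {s..s + real N * h + h}"
      using Suc.prems(1) unfolding e by (rule integrable_continuous_real)
  qed (use h in auto)
  moreover have "integral {s + real N * h..s + real N * h + h} P \<ge> \<beta>"
    using Suc.prems(2)[of N] by simp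
  ultimately show ?case using IH e by (simp add: algebra_simps)
qed

lemma prim_diff:
  fixes \<phi> :: "real \<Rightarrow> real"
  assumes cont: "continuous_on {0..L} \<phi>" and nn: "\<And>t. t \<in> {0..L} \<Longrightarrow> \<phi> t \<ge> 0"
    and u: "u \<in> {0..L}" and v: "v \<in> {0..L}"
  shows "integral {min u v..max u v} \<phi> = \<bar>integral {0..v} \<phi> - integral {0..u} \<phi>\<bar>"
proof -
  have *: "integral {a..b} \<phi> = \<bar>integral {0..b} \<phi> - integral {0..a} \<phi>\<bar>"
    if ab: "a \<le> b" "a \<in> {0..L}" "b \<in> {0..L}" for a b
  proof -
    have cb: "continuous_on {0..b} \<phi>" by (rule continuous_on_subset[OF cont]) (use ab in auto)
    have "integral {0..a} \<phi> + integral {a..b} \<phi> = integral {0..b} \<phi>"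
      by (rule Henstock_Kurzweil_Integration.integral_combine) (use ab cb in \<open>auto intro!: integrable_continuous_real\<close>)
    moreover have "integral {a..b} \<phi> \<ge> 0"
      by (rule integral_nonneg) (use ab cb nn in \<open>auto intro!: integrable_continuous_real
          intro: continuous_on_subset\<close>)
    ultimately show ?thesis by linarith
  qed
  show ?thesis
  proof (cases "u \<le> v")
    case True then show ?thesis using *[OF True u v] by simp
  next
    case False then show ?thesis using *[of v u] u v by (simp add: abs_minus_commute)
  qed
qed

lemma integral_bound_const:
  fixes \<phi> :: "real \<Rightarrow> real"
  assumes "a \<le> b" "continuous_on {a..b} \<phi>" "\<And>t. t \<in> {a..b} \<Longrightarrow> \<phi> t \<le> k"
  shows "integral {a..b} \<phi> \<le> k * (b - a)"
proof -
  have "integral {a..b} \<phi> \<le> integral {a..b} (\<lambda>t. k)"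
    by (rule integral_le) (use assms in \<open>auto intro!: integrable_continuous_real\<close>)
  then show ?thesis using assms(1) by (simp add: content_real mult.commute)
qed

lemma integral_bound_fun:
  fixes \<phi> \<psi> :: "real \<Rightarrow> real"
  assumes "a \<le> b" "continuous_on {a..b} \<phi>" "continuous_on {a..b} \<psi>"
    "\<And>t. t \<in> {a..b} \<Longrightarrow> \<phi> t \<le> \<psi> t + k"
  shows "integral {a..b} \<phi> \<le> integral {a..b} \<psi> + k * (b - a)"
proof -
  have "integral {a..b} \<phi> \<le> integral {a..b} (\<lambda>t. \<psi> t + k)"
    by (rule integral_le) (use assms in \<open>auto intro!: integrable_continuous_real continuous_intros\<close>)
  also have "\<dots> = integral {a..b} \<psi> + integral {a..b} (\<lambda>t. k)"
    by (rule integral_add) (use assms in \<open>auto intro!: integrable_continuous_real continuous_intros\<close>)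
  finally show ?thesis using assms(1) by (simp add: content_real mult.commute)
qed

lemma ode_setup:
  fixes \<psi> \<psi>1 \<psi>2 :: "real \<Rightarrow> complex" and W :: "real \<Rightarrow> real"
  assumes eps: "\<epsilon> > 0" and H2: "H2_on L \<psi> \<psi>1 \<psi>2" and Wc: "continuous_on {0..L} W"
    and AE: "AE x in lebesgue. x \<in> {0..L} \<longrightarrow>
           - complex_of_real (\<epsilon>\<^sup>2) * \<psi>2 x + complex_of_real (W x) * \<psi> x = complex_of_real E * \<psi> x"
    and x: "x \<in> {0..L}"
  shows "(\<psi>1 has_vector_derivative complex_of_real ((W x - E) / \<epsilon>\<^sup>2) * \<psi> x) (at x within {0..L})"
proof -
  define g where "g x = complex_of_real ((W x - E) / \<epsilon>\<^sup>2) * \<psi> x" for x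
  have dpsi: "\<And>x. x \<in> {0..L} \<Longrightarrow> (\<psi> has_vector_derivative \<psi>1 x) (at x within {0..L})"
    and int2: "\<And>x. x \<in> {0..L} \<Longrightarrow> (\<psi>2 has_integral (\<psi>1 x - \<psi>1 0)) {0..x}"
    using H2 unfolding H2_on_def by auto
  have psic: "continuous_on {0..L} \<psi>"
    using dpsi by (meson has_vector_derivative_continuous continuous_on_eq_continuous_within)
  have gc: "continuous_on {0..L} g" unfolding g_def
    by (intro continuous_intros psic Wc continuous_on_of_real) (use eps in auto)
  obtain N where N: "{x \<in> space lebesgue. \<not> (x \<in> {0..L} \<longrightarrow>
           - complex_of_real (\<epsilon>\<^sup>2) * \<psi>2 x + complex_of_real (W x) * \<psi> x = complex_of_real E * \<psi> x)} \<subseteq> N"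
    and Nnull: "N \<in> null_sets lebesgue"
    using AE by (elim AE_E) blast
  have eqg: "\<psi>2 y = g y" if "y \<in> {0..L}" "y \<notin> N" for y
  proof -
    have e: "- complex_of_real (\<epsilon>\<^sup>2) * \<psi>2 y + complex_of_real (W y) * \<psi> y = complex_of_real E * \<psi> y"
      using N that by auto
    have ne: "complex_of_real (\<epsilon>\<^sup>2) \<noteq> 0" using eps by simp
    have "complex_of_real (\<epsilon>\<^sup>2) * \<psi>2 y = complex_of_real (W y - E) * \<psi> y"
      using e by (simp add: algebra_simps)
    then have "\<psi>2 y = complex_of_real (W y - E) * \<psi> y / complex_of_real (\<epsilon>\<^sup>2)"
      using ne by (simp add: field_simps)
    then show ?thesis unfolding g_def by simp
  qed
  have intg: "integral {0..u} g = \<psi>1 u - \<psi>1 0" if u: "u \<in> {0..L}" for u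
  proof -
    have "(g has_integral (\<psi>1 u - \<psi>1 0)) {0..u}"
    proof (rule has_integral_spike[OF _ _ int2[OF u]])
      show "negligible N" using Nnull by (simp add: negligible_iff_null_sets)
      fix y assume "y \<in> {0..u} - N"
      then show "g y = \<psi>2 y" using eqg[of y] u by auto
    qed
    then show ?thesis by (rule integral_unique)
  qed
  have "((\<lambda>u. \<psi>1 0 + integral {0..u} g) has_vector_derivative g x) (at x within {0..L})"
    using integral_has_vector_derivative[OF gc x]
    by (auto intro!: derivative_eq_intros)
  then have "(\<psi>1 has_vector_derivative g x) (at x within {0..L})"
    by (rule has_vector_derivative_transform[OF x, rotated]) (simp add: intg)
  then show ?thesis by (simp add: g_def)
qed

lemma at_interior_deriv:
  assumes "(f has_real_derivative D) (at x within {0..L})" "x \<in> {0<..<L}"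
  shows "(f has_real_derivative D) (at x)"
proof -
  have "x \<in> interior {0..L}" using assms(2) by simp
  then have "at x within {0..L} = at x" by (rule at_within_interior)
  then show ?thesis using assms(1) by metis
qed

lemma sq_deriv:
  assumes "(f has_real_derivative f') (at x within S)"
  shows "((\<lambda>x. (f x)\<^sup>2) has_real_derivative 2 * f x * f') (at x within S)"
  using DERIV_mult'[OF assms assms] by (simp add: power2_eq_square algebra_simps)

lemma max_point:
  fixes a b a1 b1 W :: "real \<Rightarrow> real"
  assumes L: "L > 0" and eps: "\<epsilon> > 0"
    and da: "\<And>x. x \<in> {0..L} \<Longrightarrow> (a has_real_derivative a1 x) (at x within {0..L})"
    and db: "\<And>x. x \<in> {0..L} \<Longrightarrow> (b has_real_derivative b1 x) (at x within {0..L})"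
    and da1: "\<And>x. x \<in> {0..L} \<Longrightarrow> (a1 has_real_derivative (W x - E) / \<epsilon>\<^sup>2 * a x) (at x within {0..L})"
    and db1: "\<And>x. x \<in> {0..L} \<Longrightarrow> (b1 has_real_derivative (W x - E) / \<epsilon>\<^sup>2 * b x) (at x within {0..L})"
    and a0: "a 0 = 0" and b0: "b 0 = 0" and aL: "a L = 0" and bL: "b L = 0"
    and norm: "integral {0..L} (\<lambda>x. (a x)\<^sup>2 + (b x)\<^sup>2) = 1"
  shows "\<exists>y\<in>{0<..<L}. W y \<le> E \<and> (a y)\<^sup>2 + (b y)\<^sup>2 \<ge> 1 / L"
proof -
  define P where "P x = (a x)\<^sup>2 + (b x)\<^sup>2" for x
  define P' where "P' x = 2 * (a x * a1 x + b x * b1 x)" for x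
  define P'' where "P'' x = 2 * ((a1 x)\<^sup>2 + (b1 x)\<^sup>2) + 2 * ((W x - E) / \<epsilon>\<^sup>2) * P x" for x
  have dP: "(P has_real_derivative P' x) (at x within {0..L})" if "x \<in> {0..L}" for x
    unfolding P_def P'_def
    using DERIV_add[OF sq_deriv[OF da[OF that]] sq_deriv[OF db[OF that]]] by (simp add: algebra_simps)
  have dP': "(P' has_real_derivative P'' x) (at x within {0..L})" if "x \<in> {0..L}" for x
    unfolding P''_def P'_def P_def
    using DERIV_cmult[OF DERIV_add[OF DERIV_mult'[OF da[OF that] da1[OF that]] DERIV_mult'[OF db[OF that] db1[OF that]]], of 2]
    by (simp add: algebra_simps power2_eq_square add_divide_distrib diff_divide_distrib)
  have Pc: "continuous_on {0..L} P"
    using dP by (meson DERIV_continuous continuous_on_eq_continuous_within)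
  obtain y where y: "y \<in> {0..L}" and ymax: "\<And>t. t \<in> {0..L} \<Longrightarrow> P t \<le> P y"
    using continuous_attains_sup[OF _ _ Pc] L by auto
  have "integral {0..L} P \<le> P y * (L - 0)"
    by (rule integral_bound_const) (use L Pc ymax in auto)
  then have Py: "P y \<ge> 1 / L" using norm L unfolding P_def by (simp add: field_simps)
  then have "P y > 0" using L by (meson divide_pos_pos less_le_trans zero_less_one)
  moreover have "P 0 = 0" "P L = 0" using a0 b0 aL bL by (auto simp: P_def)
  ultimately have "y \<noteq> 0" "y \<noteq> L" by auto
  then have yi: "y \<in> {0<..<L}" using y by auto
  have "W y \<le> E"
  proof (rule ccontr)
    assume "\<not> W y \<le> E"
    then have "(W y - E) / \<epsilon>\<^sup>2 > 0" using eps by simp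
    then have "2 * ((W y - E) / \<epsilon>\<^sup>2) * P y > 0" using \<open>P y > 0\<close> by (intro mult_pos_pos) auto
    then have "P'' y > 0" unfolding P''_def
      by (intro add_nonneg_pos) auto
    have dPa: "DERIV P x :> P' x" if "x \<in> {0<..<L}" for x
      using at_interior_deriv[OF dP that] that by auto
    have dP'a: "DERIV P' y :> P'' y"
      using at_interior_deriv[OF dP' yi] yi by auto
    have "P' y = 0"
    proof (rule DERIV_local_max[OF dPa[OF yi]])
      show "0 < min y (L - y)" using yi by auto
      show "\<forall>z. \<bar>y - z\<bar> < min y (L - y) \<longrightarrow> P z \<le> P y"
        using ymax by (auto simp: abs_less_iff)
    qed
    obtain d where d: "d > 0" and inc: "\<And>h. h > 0 \<Longrightarrow> h < d \<Longrightarrow> P' y < P' (y + h)"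
      using DERIV_pos_inc_right[OF dP'a \<open>P'' y > 0\<close>] by blast
    define m where "m = min d (L - y)"
    define h where "h = m / 2"
    have m: "m > 0" "m \<le> d" "m \<le> L - y" using d yi by (auto simp: m_def)
    have h: "h > 0" "h < d" "y + h < L" using m unfolding h_def by linarith+
    obtain z where z: "y < z" "z < y + h" "P (y + h) - P y = (y + h - y) * P' z"
    proof -
      have "\<And>x. y \<le> x \<Longrightarrow> x \<le> y + h \<Longrightarrow> DERIV P x :> P' x"
        using h yi by (intro dPa) auto
      then show ?thesis using MVT2[of y "y + h" P P'] h(1) that by auto
    qed
    have "P' z > 0" using inc[of "z - y"] z h \<open>P' y = 0\<close> by auto
    then have "(y + h - y) * P' z > 0" using h by simp
    then have "P (y + h) > P y" using z(3) by linarith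
    moreover have "P (y + h) \<le> P y" using ymax[of "y + h"] h yi by auto
    ultimately show False by simp
  qed
  then show ?thesis using yi Py unfolding P_def by auto
qed

lemma C1_cont:
  assumes "C1_on L V V'"
  shows "continuous_on {0..L} V"
  using assms unfolding C1_on_def
  by (meson DERIV_continuous continuous_on_eq_continuous_within)

lemma cont_bdd:
  fixes \<phi> :: "real \<Rightarrow> real"
  assumes "continuous_on {0..L} \<phi>"
  shows "bdd_above (\<phi> ` {0..L})" "bdd_below (\<phi> ` {0..L})"
proof -
  have "compact (\<phi> ` {0..L})" by (rule compact_continuous_image[OF assms]) simp
  then have "bounded (\<phi> ` {0..L})" by (rule compact_imp_bounded)
  then show "bdd_above (\<phi> ` {0..L})" "bdd_below (\<phi> ` {0..L})"
    by (auto intro: bounded_imp_bdd_above bounded_imp_bdd_below)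
qed

lemma quasi_convex:
  assumes V: "C1_on L V V'"
    and crit: "\<And>x. x \<in> {0..L} \<Longrightarrow> V' x = 0 \<longleftrightarrow> x = x0"
    and x0_min: "V x0 = (INF x\<in>{0..L}. V x)"
    and z: "z \<in> {0..L}" and y: "y \<in> {0..L}"
    and s: "min z y \<le> s" "s \<le> max z y"
  shows "V s \<le> max (V z) (V y)"
proof (rule ccontr)
  assume A: "\<not> V s \<le> max (V z) (V y)"
  define lo where "lo = min z y"
  define hi where "hi = max z y"
  have sub: "{lo..hi} \<subseteq> {0..L}" using z y by (auto simp: lo_def hi_def)
  have Vc: "continuous_on {0..L} V" by (rule C1_cont[OF V])
  have "lo \<le> hi" by (simp add: lo_def hi_def)
  obtain w where w: "w \<in> {lo..hi}" and wmax: "\<And>t. t \<in> {lo..hi} \<Longrightarrow> V t \<le> V w"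
    using continuous_attains_sup[of "{lo..hi}" V] continuous_on_subset[OF Vc sub] \<open>lo \<le> hi\<close> by auto
  have sin: "s \<in> {lo..hi}" using s by (simp add: lo_def hi_def)
  have Vlo: "V lo \<le> max (V z) (V y)" and Vhi: "V hi \<le> max (V z) (V y)"
    by (auto simp: lo_def hi_def min_def max_def)
  have "V w \<ge> V s" using wmax[OF sin] .
  then have "w \<noteq> lo" "w \<noteq> hi" using A Vlo Vhi by auto
  then have wi: "w \<in> {lo<..<hi}" using w by auto
  then have w0: "w \<in> {0<..<L}" using sub \<open>lo \<le> hi\<close> by auto
  have dV: "(V has_real_derivative V' w) (at w within {0..L})"
    using V w0 unfolding C1_on_def by auto
  have "V' w = 0"
  proof (rule DERIV_local_max[OF at_interior_deriv[OF dV w0]])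
    show "0 < min (w - lo) (hi - w)" using wi by auto
    show "\<forall>t. \<bar>w - t\<bar> < min (w - lo) (hi - w) \<longrightarrow> V t \<le> V w"
      using wmax by (auto simp: abs_less_iff)
  qed
  then have "w = x0" using crit w0 by auto
  moreover have "(INF x\<in>{0..L}. V x) \<le> V lo"
    using sub \<open>lo \<le> hi\<close> by (intro cINF_lower cont_bdd(2)[OF Vc]) auto
  ultimately have "V w \<le> V lo" using x0_min by simp
  then show False using \<open>V w \<ge> V s\<close> A Vlo by linarith
qed

lemma agmon_bound:
  fixes W :: "real \<Rightarrow> real"
  assumes L: "L > 0" and V: "C1_on L V V'"
    and crit: "\<And>x. x \<in> {0..L} \<Longrightarrow> V' x = 0 \<longleftrightarrow> x = x0"
    and x0_in: "x0 \<in> {0..L}"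
    and x0_min: "V x0 = (INF x\<in>{0..L}. V x)"
    and Wc: "continuous_on {0..L} W"
    and close: "\<And>x. x \<in> {0..L} \<Longrightarrow> \<bar>V x - W x\<bar> \<le> \<tau>"
    and y: "y \<in> {0..L}" and Wy: "W y \<le> E"
    and p: "p \<in> {0..L}"
  shows "\<bar>integral {0..p} (\<lambda>t. sqrt (max (W t - E) 0)) - integral {0..y} (\<lambda>t. sqrt (max (W t - E) 0))\<bar>
     \<le> agmon L V E p + L * (sqrt (2 * \<tau>) + sqrt (3 * \<tau>))"
proof -
  define f where "f t = sqrt (max (W t - E) 0)" for t
  define E' where "E' = max E (E0 L V)"
  define g where "g t = sqrt (max (V t - E') 0)" for t
  define F where "F t = integral {0..t} f" for t
  have tau: "\<tau> \<ge> 0" using close[of 0] L by auto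
  have Vc: "continuous_on {0..L} V" by (rule C1_cont[OF V])
  have fc: "continuous_on {0..L} f" unfolding f_def by (intro continuous_intros Wc)
  have gc: "continuous_on {0..L} g" unfolding g_def by (intro continuous_intros Vc)
  have E0eq: "E0 L V = V x0" unfolding E0_def using x0_min by simp
  have "V x0 \<le> V y" using x0_min y by (simp add: cINF_lower cont_bdd(2)[OF Vc])
  then have EE: "E' - E \<le> \<tau>" using close[OF y] Wy unfolding E'_def E0eq by auto
  have Vy: "V y \<le> E' + \<tau>" using close[OF y] Wy unfolding E'_def by auto
  have ag: "agmon L V E p = (INF z\<in>KE L V E'. integral {min z p..max z p} g)"
    unfolding agmon_def E'_def g_def Let_def by simp
  have Kne: "KE L V E' \<noteq> {}"
  proof -
    have "x0 \<in> KE L V E'" using x0_in unfolding KE_def E'_def E0eq by auto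
    then show ?thesis by auto
  qed
  have fg: "f t \<le> g t + sqrt (2 * \<tau>)" if "t \<in> {0..L}" for t
  proof -
    have "max (W t - E) 0 \<le> max (V t - E') 0 + 2 * \<tau>" using close[OF that] EE tau by auto
    then have "f t \<le> sqrt (max (V t - E') 0 + 2 * \<tau>)" unfolding f_def by (rule real_sqrt_le_mono)
    also have "\<dots> \<le> g t + sqrt (2 * \<tau>)" unfolding g_def by (rule sqrt_add_le_add_sqrt) (use tau in auto)
    finally show ?thesis .
  qed
  have "\<bar>F p - F y\<bar> - L * (sqrt (2 * \<tau>) + sqrt (3 * \<tau>)) \<le> (INF z\<in>KE L V E'. integral {min z p..max z p} g)"
  proof (rule cINF_greatest[OF Kne])
    fix z assume "z \<in> KE L V E'"
    then have z: "z \<in> {0..L}" and Vz: "V z \<le> E'" unfolding KE_def by auto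
    have 1: "\<bar>F p - F z\<bar> \<le> integral {min z p..max z p} g + sqrt (2 * \<tau>) * L"
    proof -
      have "\<bar>F p - F z\<bar> = integral {min z p..max z p} f"
        unfolding F_def using prim_diff[OF fc _ z p] by (simp add: f_def abs_minus_commute)
      also have "\<dots> \<le> integral {min z p..max z p} g + sqrt (2 * \<tau>) * (max z p - min z p)"
      proof (rule integral_bound_fun)
        have "{min z p..max z p} \<subseteq> {0..L}" using z p by auto
        then show "continuous_on {min z p..max z p} f" "continuous_on {min z p..max z p} g"
          using continuous_on_subset[OF fc] continuous_on_subset[OF gc] by blast+
        fix t assume "t \<in> {min z p..max z p}"
        then have "t \<in> {0..L}" using z p by auto
        then show "f t \<le> g t + sqrt (2 * \<tau>)" by (rule fg)
      qed simp
      also have "sqrt (2 * \<tau>) * (max z p - min z p) \<le> sqrt (2 * \<tau>) * L"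
        using z p tau by (intro mult_left_mono) auto
      finally show ?thesis by simp
    qed
    have 2: "\<bar>F z - F y\<bar> \<le> sqrt (3 * \<tau>) * L"
    proof -
      have "\<bar>F z - F y\<bar> = integral {min z y..max z y} f"
        unfolding F_def using prim_diff[OF fc _ y z] by (simp add: f_def min.commute max.commute)
      also have "\<dots> \<le> sqrt (3 * \<tau>) * (max z y - min z y)"
      proof (rule integral_bound_const)
        have "{min z y..max z y} \<subseteq> {0..L}" using z y by auto
        then show "continuous_on {min z y..max z y} f" using continuous_on_subset[OF fc] by blast
        fix t assume t: "t \<in> {min z y..max z y}"
        then have t0: "t \<in> {0..L}" using z y by auto
        have "V t \<le> max (V z) (V y)" using quasi_convex[OF V crit x0_min z y] t by auto
        then have "W t - E \<le> 3 * \<tau>" using close[OF t0] Vz Vy EE by auto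
        then have "max (W t - E) 0 \<le> 3 * \<tau>" using tau by auto
        then show "f t \<le> sqrt (3 * \<tau>)" unfolding f_def by (rule real_sqrt_le_mono)
      qed simp
      also have "\<dots> \<le> sqrt (3 * \<tau>) * L"
        using z y tau by (intro mult_left_mono) auto
      finally show ?thesis .
    qed
    have "\<bar>F p - F y\<bar> \<le> \<bar>F p - F z\<bar> + \<bar>F z - F y\<bar>" by linarith
    then show "\<bar>F p - F y\<bar> - L * (sqrt (2 * \<tau>) + sqrt (3 * \<tau>)) \<le> integral {min z p..max z p} g"
      using 1 2 by (simp add: algebra_simps)
  qed
  then show ?thesis unfolding ag F_def f_def by linarith
qed

lemma amgm_term:
  fixes a a1 e m :: real
  assumes "e > 0" "m > 0"
  shows "2 * \<bar>a * a1\<bar> * (e * sqrt m) \<le> e\<^sup>2 * a1\<^sup>2 + m * a\<^sup>2"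
proof -
  have sm: "(sqrt m)\<^sup>2 = m" using assms by simp
  have "0 \<le> (e * \<bar>a1\<bar> - sqrt m * \<bar>a\<bar>)\<^sup>2" by simp
  also have "\<dots> = e\<^sup>2 * a1\<^sup>2 + (sqrt m)\<^sup>2 * a\<^sup>2 - 2 * \<bar>a * a1\<bar> * (e * sqrt m)"
    using assms by (simp add: power2_eq_square algebra_simps abs_mult)
  finally show ?thesis unfolding sm by simp
qed

lemma rate_T2:
  fixes q \<eta> :: real
  assumes eta: "\<eta> > 0"
  defines "m \<equiv> sqrt (q\<^sup>2 + \<eta>\<^sup>2)"
  shows "(q + m) / sqrt m \<le> 2 * sqrt (max q 0) + sqrt \<eta>"
proof -
  have m2: "m\<^sup>2 = q\<^sup>2 + \<eta>\<^sup>2" unfolding m_def by simp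
  have m0: "m \<ge> 0" unfolding m_def by simp
  have meta: "m \<ge> \<eta>" unfolding m_def using eta by (simp add: real_le_rsqrt)
  have mq: "m \<ge> \<bar>q\<bar>" unfolding m_def by (simp add: real_le_rsqrt)
  have smpos: "sqrt m > 0" using meta eta by simp
  show ?thesis
  proof (cases "q \<le> 0")
    case True
    have "(m + q) * (m - q) = \<eta>\<^sup>2" using m2 by (simp add: power2_eq_square algebra_simps)
    moreover have "m - q \<ge> m" using True by simp
    moreover have "m + q \<ge> 0" using mq True by linarith
    ultimately have "(m + q) * m \<le> \<eta>\<^sup>2" by (smt (verit) mult_left_mono)
    then have "(q + m) \<le> \<eta>\<^sup>2 / m" using meta eta by (simp add: field_simps)
    then have "(q + m) / sqrt m \<le> \<eta>\<^sup>2 / m / sqrt m" using smpos by (intro divide_right_mono) auto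
    also have "\<eta>\<^sup>2 / m / sqrt m \<le> \<eta>\<^sup>2 / \<eta> / sqrt \<eta>"
    proof -
      have "\<eta> * sqrt \<eta> \<le> m * sqrt m" using meta eta by (intro mult_mono) auto
      then show ?thesis using eta meta by (simp only: divide_divide_eq_left) (intro divide_left_mono mult_pos_pos, auto)
    qed
    also have "\<eta>\<^sup>2 / \<eta> / sqrt \<eta> = sqrt \<eta>"
      using eta by (simp add: power2_eq_square field_simps real_div_sqrt)
    finally show ?thesis using True by (simp add: max_def)
  next
    case False
    have "m\<^sup>2 \<le> (q + \<eta>)\<^sup>2" using m2 False eta by (simp add: power2_eq_square algebra_simps)
    then have "m \<le> q + \<eta>" using False eta m0 by (simp add: power_mono_iff abs_le_square_iff) 
    then have "(q + m) / sqrt m \<le> (2 * q + \<eta>) / sqrt m" using smpos by (simp add: divide_right_mono)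
    also have "\<dots> = 2 * (q / sqrt m) + \<eta> / sqrt m" by (simp add: add_divide_distrib)
    also have "q / sqrt m \<le> q / sqrt q"
      using False mq by (intro divide_left_mono) auto
    also have "\<eta> / sqrt m \<le> \<eta> / sqrt \<eta>"
      using eta meta by (intro divide_left_mono) auto
    also have "q / sqrt q = sqrt q" using False by (simp add: real_div_sqrt)
    also have "\<eta> / sqrt \<eta> = sqrt \<eta>" using eta by (simp add: real_div_sqrt)
    finally show ?thesis using False by simp
  qed
qed

lemma rate_ineq:
  fixes q q' a b a1 b1 \<epsilon> \<eta> K :: real
  assumes eps: "\<epsilon> > 0" and eta: "\<eta> > 0" and K: "\<bar>q'\<bar> \<le> K"
  defines "m \<equiv> sqrt (q\<^sup>2 + \<eta>\<^sup>2)"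
  shows "\<bar>2 * (q + m) * (a * a1 + b * b1) + q * q' / m * (a\<^sup>2 + b\<^sup>2)\<bar>
     \<le> (2 / \<epsilon> * sqrt (max q 0) + sqrt \<eta> / \<epsilon> + K / \<eta>) * (\<epsilon>\<^sup>2 * (a1\<^sup>2 + b1\<^sup>2) + m * (a\<^sup>2 + b\<^sup>2))"
proof -
  define Gv where "Gv = \<epsilon>\<^sup>2 * (a1\<^sup>2 + b1\<^sup>2) + m * (a\<^sup>2 + b\<^sup>2)"
  have meta: "m \<ge> \<eta>" unfolding m_def using eta by (simp add: real_le_rsqrt)
  have mq: "m \<ge> \<bar>q\<bar>" unfolding m_def by (simp add: real_le_rsqrt)
  have m0: "m > 0" using meta eta by simp
  have sm: "sqrt m > 0" using m0 by simp
  have qm: "q + m \<ge> 0" using mq by linarith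
  have Gv0: "Gv \<ge> 0" unfolding Gv_def using m0 by simp
  have h1: "2 * \<bar>a * a1 + b * b1\<bar> * (\<epsilon> * sqrt m) \<le> Gv"
  proof -
    have "2 * \<bar>a * a1 + b * b1\<bar> * (\<epsilon> * sqrt m) \<le> 2 * (\<bar>a * a1\<bar> + \<bar>b * b1\<bar>) * (\<epsilon> * sqrt m)"
      using eps sm abs_triangle_ineq[of "a * a1" "b * b1"] by (intro mult_right_mono) auto
    also have "\<dots> = 2 * \<bar>a * a1\<bar> * (\<epsilon> * sqrt m) + 2 * \<bar>b * b1\<bar> * (\<epsilon> * sqrt m)"
      by (simp add: algebra_simps)
    also have "\<dots> \<le> (\<epsilon>\<^sup>2 * a1\<^sup>2 + m * a\<^sup>2) + (\<epsilon>\<^sup>2 * b1\<^sup>2 + m * b\<^sup>2)"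
      using amgm_term[OF eps m0, of a a1] amgm_term[OF eps m0, of b b1] by linarith
    also have "\<dots> = Gv" unfolding Gv_def by (simp add: algebra_simps)
    finally show ?thesis .
  qed
  have h2: "\<bar>2 * (q + m) * (a * a1 + b * b1)\<bar> \<le> (2 / \<epsilon> * sqrt (max q 0) + sqrt \<eta> / \<epsilon>) * Gv"
  proof -
    have "\<bar>2 * (q + m) * (a * a1 + b * b1)\<bar> = (q + m) * (2 * \<bar>a * a1 + b * b1\<bar>)"
      using qm by (simp add: abs_mult)
    also have "2 * \<bar>a * a1 + b * b1\<bar> \<le> Gv / (\<epsilon> * sqrt m)"
      using h1 eps sm by (simp add: field_simps)
    also have "(q + m) * (Gv / (\<epsilon> * sqrt m)) = ((q + m) / sqrt m) / \<epsilon> * Gv"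
      by (simp add: field_simps)
    also have "\<dots> \<le> (2 * sqrt (max q 0) + sqrt \<eta>) / \<epsilon> * Gv"
      using rate_T2[OF eta, of q] eps Gv0 unfolding m_def
      by (intro mult_right_mono divide_right_mono) auto
    also have "(2 * sqrt (max q 0) + sqrt \<eta>) / \<epsilon> = 2 / \<epsilon> * sqrt (max q 0) + sqrt \<eta> / \<epsilon>"
      by (simp add: add_divide_distrib)
    finally show ?thesis using qm by (simp add: mult_left_mono)
  qed
  have h3: "\<bar>q * q' / m * (a\<^sup>2 + b\<^sup>2)\<bar> \<le> K / \<eta> * Gv"
  proof -
    have "\<bar>q\<bar> / m \<le> 1" using mq m0 by simp
    then have "\<bar>q * q' / m\<bar> \<le> K"
    proof -
      have "\<bar>q * q' / m\<bar> = (\<bar>q\<bar> / m) * \<bar>q'\<bar>" using m0 by (simp add: abs_mult)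
      also have "\<dots> \<le> 1 * \<bar>q'\<bar>" using \<open>\<bar>q\<bar> / m \<le> 1\<close> by (intro mult_right_mono) auto
      finally show ?thesis using K by simp
    qed
    then have "\<bar>q * q' / m\<bar> * (a\<^sup>2 + b\<^sup>2) \<le> K * (a\<^sup>2 + b\<^sup>2)"
      by (intro mult_right_mono) auto
    then have "\<bar>q * q' / m * (a\<^sup>2 + b\<^sup>2)\<bar> \<le> K * (a\<^sup>2 + b\<^sup>2)"
      by (simp only: abs_mult[of "q * q' / m"]) simp
    also have "K * (a\<^sup>2 + b\<^sup>2) \<le> K / \<eta> * (m * (a\<^sup>2 + b\<^sup>2))"
    proof -
      have K0: "K \<ge> 0" using K by simp
      have "K = K / \<eta> * \<eta>" using eta by simp
      also have "\<dots> \<le> K / \<eta> * m" using meta K0 eta by (intro mult_left_mono) auto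
      finally have "K \<le> K / \<eta> * m" .
      then have "K * (a\<^sup>2 + b\<^sup>2) \<le> (K / \<eta> * m) * (a\<^sup>2 + b\<^sup>2)"
        by (intro mult_right_mono) auto
      then show ?thesis by (simp only: mult.assoc)
    qed
    also have "\<dots> \<le> K / \<eta> * Gv"
      unfolding Gv_def using K eta by (intro mult_left_mono) auto
    finally show ?thesis .
  qed
  have "\<bar>2 * (q + m) * (a * a1 + b * b1) + q * q' / m * (a\<^sup>2 + b\<^sup>2)\<bar>
      \<le> \<bar>2 * (q + m) * (a * a1 + b * b1)\<bar> + \<bar>q * q' / m * (a\<^sup>2 + b\<^sup>2)\<bar>" by (rule abs_triangle_ineq)
  also have "\<dots> \<le> (2 / \<epsilon> * sqrt (max q 0) + sqrt \<eta> / \<epsilon>) * Gv + K / \<eta> * Gv" using h2 h3 by linarith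
  finally show ?thesis unfolding Gv_def by (simp add: algebra_simps)
qed

lemma inv_aux: fixes s q w :: real shows "inverse s / 2 * (2 * q * w) = q * w / s"
  by (cases "s = 0") (simp_all add: field_simps)

lemma core_G:
  fixes W W' a b a1 b1 :: "real \<Rightarrow> real"
  assumes eps: "\<epsilon> > 0" and eta: "\<eta> > 0"
    and dW: "\<And>x. x \<in> {0..L} \<Longrightarrow> (W has_real_derivative W' x) (at x within {0..L})"
    and KW: "\<And>x. x \<in> {0..L} \<Longrightarrow> \<bar>W' x\<bar> \<le> K"
    and da: "\<And>x. x \<in> {0..L} \<Longrightarrow> (a has_real_derivative a1 x) (at x within {0..L})"
    and db: "\<And>x. x \<in> {0..L} \<Longrightarrow> (b has_real_derivative b1 x) (at x within {0..L})"
    and da1: "\<And>x. x \<in> {0..L} \<Longrightarrow> (a1 has_real_derivative (W x - E) / \<epsilon>\<^sup>2 * a x) (at x within {0..L})"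
    and db1: "\<And>x. x \<in> {0..L} \<Longrightarrow> (b1 has_real_derivative (W x - E) / \<epsilon>\<^sup>2 * b x) (at x within {0..L})"
    and x: "x \<in> {0..L}" and y: "y \<in> {0..L}"
  defines "G \<equiv> \<lambda>t. \<epsilon>\<^sup>2 * ((a1 t)\<^sup>2 + (b1 t)\<^sup>2) + sqrt ((W t - E)\<^sup>2 + \<eta>\<^sup>2) * ((a t)\<^sup>2 + (b t)\<^sup>2)"
    and "F \<equiv> \<lambda>t. integral {0..t} (\<lambda>s. sqrt (max (W s - E) 0))"
  shows "G y * exp (- (2 / \<epsilon> * \<bar>F x - F y\<bar> + (sqrt \<eta> / \<epsilon> + K / \<eta>) * \<bar>x - y\<bar>)) \<le> G x"
proof -
  define f where "f s = sqrt (max (W s - E) 0)" for s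
  define c1 where "c1 = sqrt \<eta> / \<epsilon> + K / \<eta>"
  define R where "R t = 2 / \<epsilon> * F t + c1 * t" for t
  define r where "r t = 2 / \<epsilon> * f t + c1" for t
  define m where "m t = sqrt ((W t - E)\<^sup>2 + \<eta>\<^sup>2)" for t
  define G' where "G' t = 2 * ((W t - E) + m t) * (a t * a1 t + b t * b1 t)
      + (W t - E) * W' t / m t * ((a t)\<^sup>2 + (b t)\<^sup>2)" for t
  have Wc: "continuous_on {0..L} W"
    using dW by (meson DERIV_continuous continuous_on_eq_continuous_within)
  have fc: "continuous_on {0..L} f" unfolding f_def by (intro continuous_intros Wc)
  have K0: "K \<ge> 0" using KW[OF x] by simp
  have mpos: "m t > 0" for t unfolding m_def using eta by (simp add: add_nonneg_pos)
  have dR: "(R has_real_derivative r t) (at t within {0..L})" if t: "t \<in> {0..L}" for t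
  proof -
    have "(F has_real_derivative f t) (at t within {0..L})"
      unfolding F_def f_def[symmetric] by (rule integral_has_real_derivative[OF fc t])
    from DERIV_add[OF DERIV_cmult[OF this, of "2 / \<epsilon>"] DERIV_cmult[OF DERIV_ident, of c1 t "{0..L}"]]
    show ?thesis unfolding R_def r_def by simp
  qed
  have dm: "(m has_real_derivative (W t - E) * W' t / m t) (at t within {0..L})" if t: "t \<in> {0..L}" for t
  proof -
    have d1: "((\<lambda>t. (W t - E)\<^sup>2 + \<eta>\<^sup>2) has_real_derivative 2 * (W t - E) * W' t) (at t within {0..L})"
      using DERIV_add[OF sq_deriv[OF DERIV_diff[OF dW[OF t] DERIV_const[of E]]] DERIV_const[of "\<eta>\<^sup>2"]]
      by simp
    have "(W t - E)\<^sup>2 + \<eta>\<^sup>2 > 0" using eta by (simp add: add_nonneg_pos)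
    from DERIV_chain'[OF d1 DERIV_real_sqrt[OF this]]
    show ?thesis unfolding m_def
    proof (rule DERIV_cong)
      show "inverse (sqrt ((W t - E)\<^sup>2 + \<eta>\<^sup>2)) / 2 * (2 * (W t - E) * W' t) =
          (W t - E) * W' t / sqrt ((W t - E)\<^sup>2 + \<eta>\<^sup>2)"
        by (rule inv_aux)
    qed
  qed
  have dG: "(G has_real_derivative G' t) (at t within {0..L})" if t: "t \<in> {0..L}" for t
  proof -
    have A: "((\<lambda>t. \<epsilon>\<^sup>2 * ((a1 t)\<^sup>2 + (b1 t)\<^sup>2)) has_real_derivative
        \<epsilon>\<^sup>2 * (2 * a1 t * ((W t - E) / \<epsilon>\<^sup>2 * a t) + 2 * b1 t * ((W t - E) / \<epsilon>\<^sup>2 * b t))) (at t within {0..L})"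
      by (rule DERIV_cmult[OF DERIV_add[OF sq_deriv[OF da1[OF t]] sq_deriv[OF db1[OF t]]]])
    have B: "((\<lambda>t. m t * ((a t)\<^sup>2 + (b t)\<^sup>2)) has_real_derivative
        m t * (2 * a t * a1 t + 2 * b t * b1 t) + (W t - E) * W' t / m t * ((a t)\<^sup>2 + (b t)\<^sup>2)) (at t within {0..L})"
      by (rule DERIV_mult'[OF dm[OF t] DERIV_add[OF sq_deriv[OF da[OF t]] sq_deriv[OF db[OF t]]], THEN DERIV_cong])
         (simp add: algebra_simps)
    have A': "((\<lambda>t. \<epsilon>\<^sup>2 * ((a1 t)\<^sup>2 + (b1 t)\<^sup>2)) has_real_derivative
        2 * (W t - E) * (a t * a1 t + b t * b1 t)) (at t within {0..L})"
      by (rule DERIV_cong[OF A]) (use eps in \<open>simp add: field_simps\<close>)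
    have "G = (\<lambda>t. \<epsilon>\<^sup>2 * ((a1 t)\<^sup>2 + (b1 t)\<^sup>2) + m t * ((a t)\<^sup>2 + (b t)\<^sup>2))"
      unfolding G_def m_def by simp
    then show ?thesis unfolding G'_def
      by (simp only:) (rule DERIV_cong[OF DERIV_add[OF A' B]], simp add: algebra_simps)
  qed
  have bd: "\<bar>G' t\<bar> \<le> r t * G t" if t: "t \<in> {0..L}" for t
    using rate_ineq[OF eps eta KW[OF t], of "W t - E" "a t" "a1 t" "b t" "b1 t"]
    unfolding G'_def r_def G_def m_def f_def c1_def by (simp add: algebra_simps)
  have pos: "G t \<ge> 0" for t unfolding G_def by simp
  have "G y * exp (- \<bar>R x - R y\<bar>) \<le> G x"
    by (rule gronwall2[OF dG dR bd pos x y])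
  moreover have "\<bar>R x - R y\<bar> \<le> 2 / \<epsilon> * \<bar>F x - F y\<bar> + (sqrt \<eta> / \<epsilon> + K / \<eta>) * \<bar>x - y\<bar>"
  proof -
    have "R x - R y = 2 / \<epsilon> * (F x - F y) + c1 * (x - y)" unfolding R_def by (simp add: algebra_simps diff_divide_distrib)
    moreover have "c1 \<ge> 0" unfolding c1_def using eps eta K0 by simp
    ultimately have "\<bar>R x - R y\<bar> \<le> \<bar>2 / \<epsilon> * (F x - F y)\<bar> + \<bar>c1 * (x - y)\<bar>" by linarith
    also have "\<dots> = 2 / \<epsilon> * \<bar>F x - F y\<bar> + c1 * \<bar>x - y\<bar>"
      using eps \<open>c1 \<ge> 0\<close> by (simp only: abs_mult) simp
    finally show ?thesis by (simp add: c1_def)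
  qed
  moreover have "G y \<ge> 0" by (rule pos)
  ultimately show ?thesis unfolding c1_def
  proof -
    assume a1: "G y * exp (- \<bar>R x - R y\<bar>) \<le> G x"
      and a2: "\<bar>R x - R y\<bar> \<le> 2 / \<epsilon> * \<bar>F x - F y\<bar> + (sqrt \<eta> / \<epsilon> + K / \<eta>) * \<bar>x - y\<bar>"
      and a3: "G y \<ge> 0"
    have "exp (- (2 / \<epsilon> * \<bar>F x - F y\<bar> + (sqrt \<eta> / \<epsilon> + K / \<eta>) * \<bar>x - y\<bar>)) \<le> exp (- \<bar>R x - R y\<bar>)"
      using a2 by simp
    then have "G y * exp (- (2 / \<epsilon> * \<bar>F x - F y\<bar> + (sqrt \<eta> / \<epsilon> + K / \<eta>) * \<bar>x - y\<bar>)) \<le> G y * exp (- \<bar>R x - R y\<bar>)"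
      using a3 by (rule mult_left_mono)
    then show ?thesis using a1 by linarith
  qed
qed

lemma mass_J:
  fixes W a b a1 b1 :: "real \<Rightarrow> real"
  assumes eps: "\<epsilon> > 0" and eta: "\<eta> > 0" "\<eta> \<le> 1"
    and da: "\<And>x. x \<in> {0..L} \<Longrightarrow> (a has_real_derivative a1 x) (at x within {0..L})"
    and db: "\<And>x. x \<in> {0..L} \<Longrightarrow> (b has_real_derivative b1 x) (at x within {0..L})"
    and da1: "\<And>x. x \<in> {0..L} \<Longrightarrow> (a1 has_real_derivative (W x - E) / \<epsilon>\<^sup>2 * a x) (at x within {0..L})"
    and db1: "\<And>x. x \<in> {0..L} \<Longrightarrow> (b1 has_real_derivative (W x - E) / \<epsilon>\<^sup>2 * b x) (at x within {0..L})"
    and Qt: "\<And>x. x \<in> {0..L} \<Longrightarrow> \<bar>W x - E\<bar> + 1 \<le> Qt"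
    and s: "0 \<le> s" "s + len \<le> L" and ell: "len > 0" "\<epsilon> \<le> len"
    and Gmin: "\<And>x. x \<in> {s..s+len} \<Longrightarrow> \<epsilon>\<^sup>2 * ((a1 x)\<^sup>2 + (b1 x)\<^sup>2) + sqrt ((W x - E)\<^sup>2 + \<eta>\<^sup>2) * ((a x)\<^sup>2 + (b x)\<^sup>2) \<ge> \<gamma>"
    and gam: "\<gamma> \<ge> 0"
  shows "integral {s..s+len} (\<lambda>x. (a x)\<^sup>2 + (b x)\<^sup>2) \<ge> len * \<gamma> / (2048 * Qt)"
proof -
  define P where "P x = (a x)\<^sup>2 + (b x)\<^sup>2" for x
  have Qt1: "Qt \<ge> 1" using Qt[of 0] s ell by auto
  define h where "h = \<epsilon> / (4 * sqrt Qt)"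
  have sq: "sqrt Qt \<ge> 1" using Qt1 by simp
  have h0: "h > 0" unfolding h_def using eps sq by simp
  have hle: "h \<le> \<epsilon> / 4" unfolding h_def using eps sq by (simp add: field_simps)
  have hh: "\<epsilon>\<^sup>2 = 16 * Qt * h\<^sup>2"
  proof -
    have "(sqrt Qt)\<^sup>2 = Qt" using Qt1 by simp
    then have "h\<^sup>2 = \<epsilon>\<^sup>2 / (16 * Qt)" unfolding h_def by (simp add: power_divide power_mult_distrib)
    then show ?thesis using Qt1 by (simp add: field_simps)
  qed
  define N where "N = nat \<lfloor>len / h\<rfloor>"
  have N1: "real N * h \<le> len"
  proof -
    have nn: "len / h \<ge> 0" using ell h0 by simp
    then have "real N = real_of_int \<lfloor>len / h\<rfloor>" unfolding N_def by simp
    then have "real N \<le> len / h" by simp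
    then show ?thesis using h0 by (simp add: field_simps)
  qed
  have N2: "real N * h \<ge> len / 2"
  proof -
    have nn: "len / h \<ge> 0" using ell h0 by simp
    then have "real N = real_of_int \<lfloor>len / h\<rfloor>" unfolding N_def by simp
    moreover have "len / h - 1 < real_of_int \<lfloor>len / h\<rfloor>" by linarith
    ultimately have "len / h - 1 < real N" by simp
    then have "len - h < real N * h" using h0 by (simp add: field_simps)
    moreover have "h \<le> len / 2" using hle ell by linarith
    ultimately show ?thesis by linarith
  qed
  have Pc: "continuous_on {0..L} P"
  proof -
    have "continuous_on {0..L} a" "continuous_on {0..L} b"
      using da db by (meson DERIV_continuous continuous_on_eq_continuous_within)+
    then show ?thesis unfolding P_def by (intro continuous_intros)
  qed
  define \<beta> where "\<beta> = h * \<gamma> / (1024 * Qt)"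
  have piece: "integral {s + real i * h .. s + real i * h + h} P \<ge> \<beta>" if i: "i < N" for i
  proof -
    define x where "x = s + real i * h"
    have "real i + 1 \<le> real N" using i by simp
    then have "(real i + 1) * h \<le> real N * h" using h0 by (intro mult_right_mono) auto
    then have "real i * h + h \<le> real N * h" by (simp add: algebra_simps)
    then have sub: "{x..x+h} \<subseteq> {s..s+len}" using N1 h0 unfolding x_def by auto
    have sub0: "{x..x+h} \<subseteq> {0..L}" using sub s by auto
    have xJ: "x \<in> {s..s+len}" using sub h0 by auto
    have cb: "\<bar>(W t - E) / \<epsilon>\<^sup>2 * c t\<bar> \<le> (1/16) / h\<^sup>2 * \<bar>c t\<bar>" if t: "t \<in> {x..x+h}" for t c
    proof -
      have "\<bar>W t - E\<bar> \<le> Qt" using Qt[of t] t sub0 by auto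
      then have "\<bar>W t - E\<bar> / \<epsilon>\<^sup>2 \<le> Qt / \<epsilon>\<^sup>2" using eps by (simp add: divide_right_mono)
      also have "Qt / \<epsilon>\<^sup>2 = (1/16) / h\<^sup>2" unfolding hh using h0 Qt1 by (simp add: field_simps)
      finally have "\<bar>W t - E\<bar> / \<epsilon>\<^sup>2 * \<bar>c t\<bar> \<le> (1/16) / h\<^sup>2 * \<bar>c t\<bar>"
        by (intro mult_right_mono) auto
      then show ?thesis by (simp only: abs_mult abs_divide) simp
    qed
    have la: "integral {x..x+h} (\<lambda>t. (a t)\<^sup>2) \<ge> h / 64 * ((a x)\<^sup>2 + h\<^sup>2 * (a1 x)\<^sup>2)"
    proof (rule local_mass[OF h0, where \<Lambda>="1/16" and c=a and cd=a1 and cdd="\<lambda>t. (W t - E) / \<epsilon>\<^sup>2 * a t"])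
      fix t assume t: "t \<in> {x..x+h}"
      then have t0: "t \<in> {0..L}" using sub0 by auto
      show "(a has_real_derivative a1 t) (at t within {x..x+h})" by (rule DERIV_subset[OF da[OF t0] sub0])
      show "(a1 has_real_derivative (W t - E) / \<epsilon>\<^sup>2 * a t) (at t within {x..x+h})"
        by (rule DERIV_subset[OF da1[OF t0] sub0])
      show "\<bar>(W t - E) / \<epsilon>\<^sup>2 * a t\<bar> \<le> 1 / 16 / h\<^sup>2 * \<bar>a t\<bar>" by (rule cb[OF t])
    qed auto
    have lb: "integral {x..x+h} (\<lambda>t. (b t)\<^sup>2) \<ge> h / 64 * ((b x)\<^sup>2 + h\<^sup>2 * (b1 x)\<^sup>2)"
    proof (rule local_mass[OF h0, where \<Lambda>="1/16" and c=b and cd=b1 and cdd="\<lambda>t. (W t - E) / \<epsilon>\<^sup>2 * b t"])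
      fix t assume t: "t \<in> {x..x+h}"
      then have t0: "t \<in> {0..L}" using sub0 by auto
      show "(b has_real_derivative b1 t) (at t within {x..x+h})" by (rule DERIV_subset[OF db[OF t0] sub0])
      show "(b1 has_real_derivative (W t - E) / \<epsilon>\<^sup>2 * b t) (at t within {x..x+h})"
        by (rule DERIV_subset[OF db1[OF t0] sub0])
      show "\<bar>(W t - E) / \<epsilon>\<^sup>2 * b t\<bar> \<le> 1 / 16 / h\<^sup>2 * \<bar>b t\<bar>" by (rule cb[OF t])
    qed auto
    have "integral {x..x+h} P = integral {x..x+h} (\<lambda>t. (a t)\<^sup>2) + integral {x..x+h} (\<lambda>t. (b t)\<^sup>2)"
      unfolding P_def
    proof (rule integral_add)
      have "continuous_on {0..L} a" "continuous_on {0..L} b"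
        using da db by (meson DERIV_continuous continuous_on_eq_continuous_within)+
      then have "continuous_on {x..x+h} a" "continuous_on {x..x+h} b"
        using sub0 continuous_on_subset by blast+
      then show "(\<lambda>t. (a t)\<^sup>2) integrable_on {x..x+h}" "(\<lambda>t. (b t)\<^sup>2) integrable_on {x..x+h}"
        by (auto intro!: integrable_continuous_real continuous_intros)
    qed
    moreover have "(a x)\<^sup>2 + h\<^sup>2 * (a1 x)\<^sup>2 + ((b x)\<^sup>2 + h\<^sup>2 * (b1 x)\<^sup>2) \<ge> \<gamma> / (16 * Qt)"
    proof -
      define mx where "mx = sqrt ((W x - E)\<^sup>2 + \<eta>\<^sup>2)"
      have "mx \<le> sqrt ((\<bar>W x - E\<bar> + 1)\<^sup>2)" unfolding mx_def using eta
      proof (intro real_sqrt_le_mono)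
        have "\<eta>\<^sup>2 \<le> 1" using eta by (simp add: power_le_one)
        moreover have "(\<bar>W x - E\<bar> + 1)\<^sup>2 = (W x - E)\<^sup>2 + 2 * \<bar>W x - E\<bar> + 1"
          by (simp add: power2_eq_square algebra_simps)
        moreover have "0 \<le> 2 * \<bar>W x - E\<bar>" by simp
        ultimately show "(W x - E)\<^sup>2 + \<eta>\<^sup>2 \<le> (\<bar>W x - E\<bar> + 1)\<^sup>2" by linarith
      qed
      also have "\<dots> \<le> Qt" using Qt[of x] xJ s by auto
      finally have mxQ: "mx \<le> 16 * Qt" using Qt1 by linarith
      have "\<gamma> \<le> \<epsilon>\<^sup>2 * ((a1 x)\<^sup>2 + (b1 x)\<^sup>2) + mx * ((a x)\<^sup>2 + (b x)\<^sup>2)" using Gmin[OF xJ] unfolding mx_def .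
      also have "\<dots> \<le> 16 * Qt * (h\<^sup>2 * ((a1 x)\<^sup>2 + (b1 x)\<^sup>2)) + 16 * Qt * ((a x)\<^sup>2 + (b x)\<^sup>2)"
      proof -
        have "mx * ((a x)\<^sup>2 + (b x)\<^sup>2) \<le> (16 * Qt) * ((a x)\<^sup>2 + (b x)\<^sup>2)"
          using mxQ by (intro mult_right_mono) auto
        moreover have "\<epsilon>\<^sup>2 * ((a1 x)\<^sup>2 + (b1 x)\<^sup>2) = 16 * Qt * (h\<^sup>2 * ((a1 x)\<^sup>2 + (b1 x)\<^sup>2))"
          unfolding hh by (simp add: mult.assoc)
        ultimately show ?thesis by linarith
      qed
      also have "\<dots> = 16 * Qt * ((a x)\<^sup>2 + h\<^sup>2 * (a1 x)\<^sup>2 + ((b x)\<^sup>2 + h\<^sup>2 * (b1 x)\<^sup>2))"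
        by (simp add: algebra_simps)
      finally show ?thesis using Qt1 by (simp add: field_simps)
    qed
    ultimately have "integral {x..x+h} P \<ge> h / 64 * (\<gamma> / (16 * Qt))"
    proof -
      assume e: "integral {x..x+h} P = integral {x..x+h} (\<lambda>t. (a t)\<^sup>2) + integral {x..x+h} (\<lambda>t. (b t)\<^sup>2)"
        and g: "(a x)\<^sup>2 + h\<^sup>2 * (a1 x)\<^sup>2 + ((b x)\<^sup>2 + h\<^sup>2 * (b1 x)\<^sup>2) \<ge> \<gamma> / (16 * Qt)"
      have "h / 64 * (\<gamma> / (16 * Qt)) \<le> h / 64 * ((a x)\<^sup>2 + h\<^sup>2 * (a1 x)\<^sup>2 + ((b x)\<^sup>2 + h\<^sup>2 * (b1 x)\<^sup>2))"
        using g h0 by (intro mult_left_mono) auto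
      also have "\<dots> = h / 64 * ((a x)\<^sup>2 + h\<^sup>2 * (a1 x)\<^sup>2) + h / 64 * ((b x)\<^sup>2 + h\<^sup>2 * (b1 x)\<^sup>2)"
        by (simp add: algebra_simps)
      finally show ?thesis using la lb e by linarith
    qed
    then show ?thesis unfolding \<beta>_def x_def by (simp add: field_simps)
  qed
  have "integral {s..s + real N * h} P \<ge> real N * \<beta>"
    by (rule pieces_sum[OF h0 _ piece]) (rule continuous_on_subset[OF Pc], use s N1 in auto)
  moreover have "integral {s..s + real N * h} P \<le> integral {s..s+len} P"
  proof -
    have cP: "continuous_on {s..s+len} P" by (rule continuous_on_subset[OF Pc]) (use s in auto)
    have "integral {s..s + real N * h} P + integral {s + real N * h..s+len} P = integral {s..s+len} P"
      by (rule Henstock_Kurzweil_Integration.integral_combine)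
         (use N1 h0 cP in \<open>auto intro!: integrable_continuous_real\<close>)
    moreover have "integral {s + real N * h..s+len} P \<ge> 0"
    proof (rule integral_nonneg)
      have "real N * h \<ge> 0" using h0 by simp
      then have "{s + real N * h..s+len} \<subseteq> {s..s+len}" by auto
      then show "P integrable_on {s + real N * h..s+len}"
        using continuous_on_subset[OF cP] integrable_continuous_real by blast
    qed (simp add: P_def)
    ultimately show ?thesis by linarith
  qed
  moreover have "real N * \<beta> \<ge> len * \<gamma> / (2048 * Qt)"
  proof -
    have "real N * \<beta> = (real N * h) * (\<gamma> / (1024 * Qt))" unfolding \<beta>_def by (simp add: field_simps)
    also have "\<dots> \<ge> (len / 2) * (\<gamma> / (1024 * Qt))"
      using N2 gam Qt1 by (intro mult_right_mono) auto
    finally show ?thesis by (simp add: field_simps)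
  qed
  ultimately show ?thesis unfolding P_def by linarith
qed

lemma lin5: fixes X T1 T2 T3 T4 T5 T6 T7 k :: real
  shows "T1 \<le> T2 \<Longrightarrow> T7 = T1 + k \<Longrightarrow> T6 = T5 + T3 \<Longrightarrow> T2 + T3 = T4 \<Longrightarrow> X \<le> T6 + T7 \<Longrightarrow> X \<le> T5 + T4 + k"
  by linarith

lemma exp_final:
  fixes Y c X A \<delta> \<epsilon> sa ka L C :: real
  assumes eps: "\<epsilon> > 0" and del: "\<delta> > 0" and c: "c > 0"
    and Y: "Y \<ge> c * exp (- X)"
    and X: "X \<le> 2 / \<epsilon> * (A + \<delta> / 8) + (sa / \<epsilon> + ka) * L"
    and sa: "sa * L \<le> \<delta> / 4"
    and C: "ka * L + \<bar>ln c\<bar> + 1 \<le> C" and eC: "\<epsilon> * C \<le> \<delta>"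
  shows "Y \<ge> exp (- (2 / \<epsilon>) * (A + \<delta>))"
proof -
  have "sa * L / \<epsilon> \<le> \<delta> / 4 / \<epsilon>" using sa eps by (intro divide_right_mono) auto
  moreover have "(sa / \<epsilon> + ka) * L = sa * L / \<epsilon> + ka * L" by (simp add: algebra_simps)
  moreover have "2 / \<epsilon> * (A + \<delta> / 8) = 2 * A / \<epsilon> + \<delta> / (4 * \<epsilon>)" using eps by (simp add: field_simps)
  moreover have "\<delta> / 4 / \<epsilon> + \<delta> / (4 * \<epsilon>) = \<delta> / (2 * \<epsilon>)" using eps by (simp add: field_simps)
  ultimately have X2: "X \<le> 2 * A / \<epsilon> + \<delta> / (2 * \<epsilon>) + ka * L"
    using X by (intro lin5) auto
  have C2: "C \<le> \<delta> / \<epsilon>" using eC eps by (simp add: field_simps mult.commute)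
  have "c = exp (ln c)" using c by simp
  then have "c * exp (- X) = exp (ln c - X)" by (simp add: exp_diff exp_minus field_simps)
  also have "ln c - X \<ge> - (2 / \<epsilon>) * (A + \<delta>)"
  proof -
    have "ln c \<ge> - \<bar>ln c\<bar>" by simp
    moreover have "2 * A / \<epsilon> + \<delta> / (2 * \<epsilon>) + \<delta> / \<epsilon> \<le> (2 / \<epsilon>) * (A + \<delta>)"
      using eps del by (simp add: field_simps)
    ultimately show ?thesis using X2 C C2 by linarith
  qed
  then have "exp (ln c - X) \<ge> exp (- (2 / \<epsilon>) * (A + \<delta>))" by simp
  finally show ?thesis using Y by linarith
qed

lemma bdry_conclude:
  fixes \<epsilon> cm Ee Z :: real
  assumes eps: "\<epsilon> > 0" and cm: "cm \<ge> 0"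
    and H: "\<epsilon>\<^sup>2 * cm\<^sup>2 \<ge> (\<bar>Ee\<bar> + 1) * exp (2 * Z)"
  shows "\<epsilon> / sqrt (\<bar>Ee\<bar> + 1) * cm \<ge> exp Z"
proof -
  have "sqrt ((\<bar>Ee\<bar> + 1) * exp (2 * Z)) \<le> sqrt (\<epsilon>\<^sup>2 * cm\<^sup>2)" using H by (rule real_sqrt_le_mono)
  moreover have "sqrt ((\<bar>Ee\<bar> + 1) * exp (2 * Z)) = sqrt (\<bar>Ee\<bar> + 1) * exp Z"
    by (simp add: real_sqrt_mult exp_double)
  moreover have "sqrt (\<epsilon>\<^sup>2 * cm\<^sup>2) = \<epsilon> * cm" using eps cm by (simp add: real_sqrt_mult)
  ultimately have "sqrt (\<bar>Ee\<bar> + 1) * exp Z \<le> \<epsilon> * cm" by simp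
  moreover have "sqrt (\<bar>Ee\<bar> + 1) > 0" by simp
  ultimately show ?thesis by (simp add: field_simps mult.commute)
qed

theorem lemma2p7:
  fixes L :: real and V V' :: "real \<Rightarrow> real" and Veps Veps' :: "real \<Rightarrow> real \<Rightarrow> real"
    and x0 :: real
  assumes L_pos: "L > 0"
    and V_C1: "C1_on L V V'"
    and Veps_C1: "\<And>\<epsilon>. \<epsilon> \<in> {0<..1} \<Longrightarrow> C1_on L (Veps \<epsilon>) (Veps' \<epsilon>)"
    and conv: "((\<lambda>\<epsilon>. C1_dist L V V' (Veps \<epsilon>) (Veps' \<epsilon>)) \<longlongrightarrow> 0) (at_right 0)"
    and x0_in: "x0 \<in> {0<..<L}"
    and crit: "\<And>x. x \<in> {0..L} \<Longrightarrow> V' x = 0 \<longleftrightarrow> x = x0"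
    and x0_min: "V x0 = (INF x\<in>{0..L}. V x)"
  shows "\<exists>D>0. \<forall>y0\<in>{0..L}. \<forall>\<delta>>0. \<exists>\<epsilon>0>0. \<epsilon>0 \<le> 1 \<and>
     (\<forall>E \<epsilon> \<psi> \<psi>1 \<psi>2. \<epsilon> \<in> {0<..<\<epsilon>0} \<and>
        H2_on L \<psi> \<psi>1 \<psi>2 \<and> \<psi> 0 = 0 \<and> \<psi> L = 0 \<and>
        (AE x in lebesgue. x \<in> {0..L} \<longrightarrow>
           - complex_of_real (\<epsilon>\<^sup>2) * \<psi>2 x + complex_of_real (Veps \<epsilon> x) * \<psi> x
             = complex_of_real E * \<psi> x) \<and>
        L2norm {0..L} \<psi> = 1
      \<longrightarrow> L2norm ({y0 - \<delta><..<y0 + \<delta>} \<inter> {0..L}) \<psi>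
             \<ge> exp (- (1 / \<epsilon>) * (agmon L V E y0 + D * \<delta>))
        \<and> \<epsilon> / sqrt (\<bar>E\<bar> + 1) * cmod (\<psi>1 0) \<ge> exp (- (1 / \<epsilon>) * (agmon L V E 0 + \<delta>))
        \<and> \<epsilon> / sqrt (\<bar>E\<bar> + 1) * cmod (\<psi>1 L) \<ge> exp (- (1 / \<epsilon>) * (agmon L V E L + \<delta>)))"
proof -
  have Vc: "continuous_on {0..L} V" by (rule C1_cont[OF V_C1])
  have V'c: "continuous_on {0..L} V'" using V_C1 unfolding C1_on_def by simp
  obtain Vhi where Vhi: "\<And>x. x \<in> {0..L} \<Longrightarrow> V x \<le> Vhi"
    using cont_bdd(1)[OF Vc] unfolding bdd_above_def by (auto simp del: atLeastAtMost_iff)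
  have Vac: "continuous_on {0..L} (\<lambda>x. \<bar>V x\<bar>)" by (intro continuous_intros Vc)
  obtain Vabs where Vabs: "\<And>x. x \<in> {0..L} \<Longrightarrow> \<bar>V x\<bar> \<le> Vabs"
    using cont_bdd(1)[OF Vac] unfolding bdd_above_def by (auto simp del: atLeastAtMost_iff)
  have V'ac: "continuous_on {0..L} (\<lambda>x. \<bar>V' x\<bar>)" by (intro continuous_intros V'c)
  obtain Kv where Kv: "\<And>x. x \<in> {0..L} \<Longrightarrow> \<bar>V' x\<bar> \<le> Kv"
    using cont_bdd(1)[OF V'ac] unfolding bdd_above_def by (auto simp del: atLeastAtMost_iff)
  have x0L: "x0 \<in> {0..L}" using x0_in by auto
  have Vmin: "V x0 \<le> V x" if "x \<in> {0..L}" for x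
    using x0_min that by (simp add: cINF_lower cont_bdd(2)[OF Vc])
  have Vhi0: "V x0 \<le> Vhi" using Vhi[OF x0L] .
  have Vabs0: "Vabs \<ge> 0" using Vabs[OF x0L] by simp
  have Kv0: "Kv \<ge> 0" using Kv[OF x0L] by simp
  define Qp where "Qp = Vhi - V x0 + 2"
  define D where "D = sqrt Qp + 1"
  define B0 where "B0 = \<bar>Vhi\<bar> + \<bar>V x0\<bar> + 3"
  have Qp0: "Qp > 0" using Vhi0 by (simp add: Qp_def)
  have B00: "B0 > 0" by (simp add: B0_def add_nonneg_pos)
  show ?thesis
  proof (rule exI[of _ D], intro conjI ballI allI impI)
    show "D > 0" unfolding D_def using Qp0 by (simp add: add_pos_pos)
    fix y0 \<delta> :: real
    assume y0: "y0 \<in> {0..L}" and del: "\<delta> > 0"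
    define len where "len = min \<delta> L / 2"
    have len0: "len > 0" using del L_pos by (simp add: len_def)
    have lenD: "len < \<delta>" "len \<le> L / 2" using del L_pos by (auto simp: len_def min_def)
    define s where "s = (if y0 + len \<le> L then y0 else y0 - len)"
    have s0: "0 \<le> s" "s + len \<le> L" using y0 lenD len0 by (auto simp: s_def)
    have sy0: "\<bar>x - y0\<bar> \<le> len" if "x \<in> {s..s+len}" for x
      using that by (auto simp: s_def split: if_splits)
    define se where "se = min 1 (\<delta> / (4 * L))"
    define \<eta> where "\<eta> = se\<^sup>2"
    have se0: "se > 0" using del L_pos by (simp add: se_def)
    have eta0: "\<eta> > 0" "\<eta> \<le> 1" using se0 by (auto simp: \<eta>_def se_def power_le_one)
    have seta: "sqrt \<eta> = se" using se0 by (simp add: \<eta>_def)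
    have setaL: "sqrt \<eta> * L \<le> \<delta> / 4"
    proof -
      have "se * L \<le> \<delta> / (4 * L) * L" using L_pos by (intro mult_right_mono) (auto simp: se_def)
      then show ?thesis using seta L_pos by simp
    qed
    define K where "K = Kv + 1"
    define \<tau>0 where "\<tau>0 = min 1 ((\<delta> / (16 * L))\<^sup>2 / 3)"
    have tau00: "\<tau>0 > 0" using del L_pos by (simp add: \<tau>0_def)
    have taubd: "L * (sqrt (2 * \<tau>) + sqrt (3 * \<tau>)) \<le> \<delta> / 8" if "0 \<le> \<tau>" "\<tau> \<le> \<tau>0" for \<tau>
    proof -
      have "3 * \<tau> \<le> (\<delta> / (16 * L))\<^sup>2" using that by (simp add: \<tau>0_def)
      then have "sqrt (3 * \<tau>) \<le> \<delta> / (16 * L)" using del L_pos by (simp add: real_sqrt_le_iff real_le_lsqrt)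
      moreover have "sqrt (2 * \<tau>) \<le> sqrt (3 * \<tau>)" using that by simp
      ultimately have "sqrt (2 * \<tau>) + sqrt (3 * \<tau>) \<le> 2 * (\<delta> / (16 * L))" by linarith
      then have "L * (sqrt (2 * \<tau>) + sqrt (3 * \<tau>)) \<le> L * (2 * (\<delta> / (16 * L)))"
        using L_pos by (intro mult_left_mono) auto
      also have "\<dots> = \<delta> / 8" using L_pos by (simp add: field_simps)
      finally show ?thesis .
    qed
    define c0 where "c0 = \<eta> / ((1 + B0) * L)"
    define C3 where "C3 = K * L / \<eta> + \<bar>ln c0\<bar> + 1"
    define c0' where "c0' = len * \<eta> / (2048 * L * (1 + B0) * (Vabs + 2))"
    define C4 where "C4 = K * L / \<eta> + \<bar>ln c0'\<bar> + 1"
    have c00: "c0 > 0" using eta0 B00 L_pos by (simp add: c0_def)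
    have c0'0: "c0' > 0" using eta0 B00 L_pos len0 Vabs0 by (simp add: c0'_def)
    have C30: "C3 > 0" unfolding C3_def using eta0 L_pos Kv0 K_def by (simp add: add_nonneg_pos)
    have C40: "C4 > 0" unfolding C4_def using eta0 L_pos Kv0 K_def by (simp add: add_nonneg_pos)
    obtain \<epsilon>1 where e10: "\<epsilon>1 > 0"
      and e1: "\<And>\<epsilon>. 0 < \<epsilon> \<Longrightarrow> \<epsilon> < \<epsilon>1 \<Longrightarrow> \<bar>C1_dist L V V' (Veps \<epsilon>) (Veps' \<epsilon>)\<bar> < \<tau>0"
    proof -
      have "eventually (\<lambda>\<epsilon>. dist (C1_dist L V V' (Veps \<epsilon>) (Veps' \<epsilon>)) 0 < \<tau>0) (at_right 0)"
        using conv tau00 by (rule tendstoD)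
      then obtain b where "b > 0" "\<And>\<epsilon>. \<epsilon> > 0 \<Longrightarrow> \<epsilon> < b \<Longrightarrow> dist (C1_dist L V V' (Veps \<epsilon>) (Veps' \<epsilon>)) 0 < \<tau>0"
        unfolding eventually_at_right_field by auto
      then show ?thesis using that by (auto simp: dist_real_def)
    qed
    define \<epsilon>0 where "\<epsilon>0 = min (min 1 \<epsilon>1) (min (\<delta> / C3) (min (\<delta> / C4) len))"
    show "\<exists>\<epsilon>0>0. \<epsilon>0 \<le> 1 \<and> (\<forall>E \<epsilon> \<psi> \<psi>1 \<psi>2. \<epsilon> \<in> {0<..<\<epsilon>0} \<and>
        H2_on L \<psi> \<psi>1 \<psi>2 \<and> \<psi> 0 = 0 \<and> \<psi> L = 0 \<and>
        (AE x in lebesgue. x \<in> {0..L} \<longrightarrow>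
           - complex_of_real (\<epsilon>\<^sup>2) * \<psi>2 x + complex_of_real (Veps \<epsilon> x) * \<psi> x
             = complex_of_real E * \<psi> x) \<and>
        L2norm {0..L} \<psi> = 1
      \<longrightarrow> L2norm ({y0 - \<delta><..<y0 + \<delta>} \<inter> {0..L}) \<psi>
             \<ge> exp (- (1 / \<epsilon>) * (agmon L V E y0 + D * \<delta>))
        \<and> \<epsilon> / sqrt (\<bar>E\<bar> + 1) * cmod (\<psi>1 0) \<ge> exp (- (1 / \<epsilon>) * (agmon L V E 0 + \<delta>))
        \<and> \<epsilon> / sqrt (\<bar>E\<bar> + 1) * cmod (\<psi>1 L) \<ge> exp (- (1 / \<epsilon>) * (agmon L V E L + \<delta>)))"
    proof (rule exI[of _ \<epsilon>0], intro conjI allI impI)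
      show "\<epsilon>0 > 0" unfolding \<epsilon>0_def using e10 del C30 C40 len0 by simp
      show "\<epsilon>0 \<le> 1" unfolding \<epsilon>0_def by simp
      fix E \<epsilon> :: real and \<psi> \<psi>1 \<psi>2 :: "real \<Rightarrow> complex"
      assume H: "\<epsilon> \<in> {0<..<\<epsilon>0} \<and> H2_on L \<psi> \<psi>1 \<psi>2 \<and> \<psi> 0 = 0 \<and> \<psi> L = 0 \<and>
        (AE x in lebesgue. x \<in> {0..L} \<longrightarrow>
           - complex_of_real (\<epsilon>\<^sup>2) * \<psi>2 x + complex_of_real (Veps \<epsilon> x) * \<psi> x
             = complex_of_real E * \<psi> x) \<and>
        L2norm {0..L} \<psi> = 1"
      then have eps: "\<epsilon> > 0" "\<epsilon> < \<epsilon>0" and H2: "H2_on L \<psi> \<psi>1 \<psi>2"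
        and psi0: "\<psi> 0 = 0" and psiL: "\<psi> L = 0"
        and AE: "AE x in lebesgue. x \<in> {0..L} \<longrightarrow>
           - complex_of_real (\<epsilon>\<^sup>2) * \<psi>2 x + complex_of_real (Veps \<epsilon> x) * \<psi> x
             = complex_of_real E * \<psi> x"
        and nrm: "L2norm {0..L} \<psi> = 1" by auto
      have eps1: "\<epsilon> < 1" "\<epsilon> < \<epsilon>1" "\<epsilon> < \<delta> / C3" "\<epsilon> < \<delta> / C4" "\<epsilon> < len"
        using eps unfolding \<epsilon>0_def by auto
      have eC3: "\<epsilon> * C3 \<le> \<delta>" using eps1(3) C30 by (simp add: field_simps)
      have eC4: "\<epsilon> * C4 \<le> \<delta>" using eps1(4) C40 by (simp add: field_simps)

      have eps01: "\<epsilon> \<in> {0<..1}" using eps eps1 by auto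
      define W where "W = Veps \<epsilon>"
      define W' where "W' = Veps' \<epsilon>"
      have WC1: "C1_on L W W'" using Veps_C1[OF eps01] by (simp add: W_def W'_def)
      have Wc: "continuous_on {0..L} W" by (rule C1_cont[OF WC1])
      have W'c: "continuous_on {0..L} W'" using WC1 unfolding C1_on_def by simp
      have dW: "\<And>x. x \<in> {0..L} \<Longrightarrow> (W has_real_derivative W' x) (at x within {0..L})"
        using WC1 unfolding C1_on_def by simp
      define \<tau> where "\<tau> = C1_dist L V V' W W'"
      have tau_lt: "\<bar>\<tau>\<bar> < \<tau>0" using e1[OF eps(1) eps1(2)] by (simp add: \<tau>_def W_def W'_def)
      define S1 where "S1 = (SUP x\<in>{0..L}. \<bar>V x - W x\<bar>)"
      define S2 where "S2 = (SUP x\<in>{0..L}. \<bar>V' x - W' x\<bar>)"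
      have bS1: "bdd_above ((\<lambda>x. \<bar>V x - W x\<bar>) ` {0..L})"
        by (rule cont_bdd(1)) (intro continuous_intros Vc Wc)
      have bS2: "bdd_above ((\<lambda>x. \<bar>V' x - W' x\<bar>) ` {0..L})"
        by (rule cont_bdd(1)) (intro continuous_intros V'c W'c)
      have S1ge: "\<bar>V x - W x\<bar> \<le> S1" if "x \<in> {0..L}" for x
        unfolding S1_def using bS1 that by (rule cSUP_upper2) simp
      have S2ge: "\<bar>V' x - W' x\<bar> \<le> S2" if "x \<in> {0..L}" for x
        unfolding S2_def using bS2 that by (rule cSUP_upper2) simp
      have S10: "S1 \<ge> 0" using S1ge[OF x0L] by linarith
      have S20: "S2 \<ge> 0" using S2ge[OF x0L] by linarith
      have tauS: "\<tau> = S1 + S2" unfolding \<tau>_def C1_dist_def S1_def S2_def ..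
      have tau0: "\<tau> \<ge> 0" using S10 S20 tauS by simp
      have tau1: "\<tau> \<le> \<tau>0" "\<tau> \<le> 1" using tau_lt tau0 by (auto simp: \<tau>0_def)
      have close: "\<bar>V x - W x\<bar> \<le> \<tau>" if "x \<in> {0..L}" for x using S1ge[OF that] S20 tauS by linarith
      have KW: "\<bar>W' x\<bar> \<le> K" if "x \<in> {0..L}" for x
        using S2ge[OF that] S10 tauS Kv[OF that] tau1 unfolding K_def by linarith
      define a where "a t = Re (\<psi> t)" for t
      define b where "b t = Im (\<psi> t)" for t
      define a1 where "a1 t = Re (\<psi>1 t)" for t
      define b1 where "b1 t = Im (\<psi>1 t)" for t
      have dpsi: "\<And>x. x \<in> {0..L} \<Longrightarrow> (\<psi> has_vector_derivative \<psi>1 x) (at x within {0..L})"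
        using H2 unfolding H2_on_def by auto
      have dpsi1: "(\<psi>1 has_vector_derivative complex_of_real ((W x - E) / \<epsilon>\<^sup>2) * \<psi> x) (at x within {0..L})"
        if "x \<in> {0..L}" for x
        by (rule ode_setup[OF eps(1) H2 Wc _ that]) (use AE in \<open>simp add: W_def\<close>)
      have da: "\<And>x. x \<in> {0..L} \<Longrightarrow> (a has_real_derivative a1 x) (at x within {0..L})"
        unfolding a_def a1_def by (rule Re_deriv[OF dpsi])
      have db: "\<And>x. x \<in> {0..L} \<Longrightarrow> (b has_real_derivative b1 x) (at x within {0..L})"
        unfolding b_def b1_def by (rule Im_deriv[OF dpsi])
      have da1: "\<And>x. x \<in> {0..L} \<Longrightarrow> (a1 has_real_derivative (W x - E) / \<epsilon>\<^sup>2 * a x) (at x within {0..L})"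
        unfolding a_def a1_def using Re_deriv[OF dpsi1] by simp
      have db1: "\<And>x. x \<in> {0..L} \<Longrightarrow> (b1 has_real_derivative (W x - E) / \<epsilon>\<^sup>2 * b x) (at x within {0..L})"
        unfolding b_def b1_def using Im_deriv[OF dpsi1] by simp
      have psic: "continuous_on {0..L} \<psi>"
        using dpsi by (meson has_vector_derivative_continuous continuous_on_eq_continuous_within)
      have cm2: "(cmod (\<psi> x))\<^sup>2 = (a x)\<^sup>2 + (b x)\<^sup>2" for x unfolding a_def b_def by (rule cmod_power2)
      have Pc: "continuous_on {0..L} (\<lambda>x. (cmod (\<psi> x))\<^sup>2)" by (intro continuous_intros psic)
      have Pint: "set_integrable lebesgue {0..L} (\<lambda>x. (cmod (\<psi> x))\<^sup>2)"
        using absolutely_integrable_continuous_real[OF Pc] by simp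
      have "(LINT x:{0..L}|lebesgue. (cmod (\<psi> x))\<^sup>2) = 1" using nrm unfolding L2norm_def by simp
      then have norm1: "integral {0..L} (\<lambda>x. (a x)\<^sup>2 + (b x)\<^sup>2) = 1"
        using set_lebesgue_integral_eq_integral(2)[OF Pint] by (simp add: cm2)
      have a0: "a 0 = 0" "b 0 = 0" "a L = 0" "b L = 0" using psi0 psiL by (auto simp: a_def b_def)
      obtain y where y: "y \<in> {0<..<L}" and Wy: "W y \<le> E" and Py: "(a y)\<^sup>2 + (b y)\<^sup>2 \<ge> 1 / L"
        using max_point[OF L_pos eps(1) da db da1 db1 a0 norm1] by blast
      have yL: "y \<in> {0..L}" using y by auto
      have Elow: "E \<ge> V x0 - \<tau>" using Wy close[OF yL] Vmin[OF yL] by linarith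
      define my where "my = sqrt ((W y - E)\<^sup>2 + \<eta>\<^sup>2)"
      have my_eta: "my \<ge> \<eta>" unfolding my_def using eta0 by (simp add: real_le_rsqrt)
      have my_q: "my \<ge> \<bar>W y - E\<bar>" unfolding my_def by (simp add: real_le_rsqrt)
      have myE: "(\<bar>E\<bar> + 1) * \<eta> \<le> (1 + B0) * my"
      proof -
        have "W y \<le> Vhi + 1" using close[OF yL] Vhi[OF yL] tau1 by linarith
        then have "E - Vhi - 1 \<le> my" using my_q by linarith
        moreover have "my \<ge> 0" using my_eta eta0 by linarith
        moreover have "- V x0 \<le> \<bar>V x0\<bar>" "Vhi \<le> \<bar>Vhi\<bar>" by auto
        ultimately have "\<bar>E\<bar> + 1 \<le> my + B0" using Elow tau1 unfolding B0_def by (cases "E \<ge> 0") auto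
        then have "(\<bar>E\<bar> + 1) * \<eta> \<le> (my + B0) * \<eta>" using eta0 by (intro mult_right_mono) auto
        also have "\<dots> = my * \<eta> + B0 * \<eta>" by (simp add: algebra_simps)
        also have "my * \<eta> \<le> my" using eta0 my_eta by (simp add: mult_left_le)
        also have "B0 * \<eta> \<le> B0 * my" using B00 my_eta by (intro mult_left_mono) auto
        finally show ?thesis by (simp add: algebra_simps)
      qed
      define G where "G t = \<epsilon>\<^sup>2 * ((a1 t)\<^sup>2 + (b1 t)\<^sup>2) + sqrt ((W t - E)\<^sup>2 + \<eta>\<^sup>2) * ((a t)\<^sup>2 + (b t)\<^sup>2)" for t
      define F where "F t = integral {0..t} (\<lambda>s. sqrt (max (W s - E) 0))" for t
      have Gy: "G y \<ge> my / L"
      proof -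
        have "my * (1 / L) \<le> my * ((a y)\<^sup>2 + (b y)\<^sup>2)"
          using Py my_eta eta0 by (intro mult_left_mono) auto
        then have "my / L \<le> my * ((a y)\<^sup>2 + (b y)\<^sup>2)" by simp
        also have "\<dots> \<le> G y" unfolding G_def my_def by simp
        finally show ?thesis .
      qed
      have coreG: "G y * exp (- (2 / \<epsilon> * \<bar>F x - F y\<bar> + (sqrt \<eta> / \<epsilon> + K / \<eta>) * \<bar>x - y\<bar>)) \<le> G x"
        if "x \<in> {0..L}" for x
        using core_G[OF eps(1) eta0(1) dW KW da db da1 db1 that yL] unfolding G_def F_def by simp
      have agb: "\<bar>F p - F y\<bar> \<le> agmon L V E p + \<delta> / 8" if "p \<in> {0..L}" for p
        using agmon_bound[OF L_pos V_C1 crit x0L x0_min Wc close yL Wy that] taubd[OF tau0 tau1(1)]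
        unfolding F_def by linarith
      have c1pos: "sqrt \<eta> / \<epsilon> + K / \<eta> \<ge> 0" using eps eta0 Kv0 K_def by simp
      have Xbd: "2 / \<epsilon> * \<bar>F x - F y\<bar> + (sqrt \<eta> / \<epsilon> + K / \<eta>) * \<bar>x - y\<bar>
          \<le> 2 / \<epsilon> * (A + \<delta> / 8) + (sqrt \<eta> / \<epsilon> + K / \<eta>) * L"
        if "x \<in> {0..L}" "\<bar>F x - F y\<bar> \<le> A + \<delta> / 8" for x A
      proof -
        have "2 / \<epsilon> * \<bar>F x - F y\<bar> \<le> 2 / \<epsilon> * (A + \<delta> / 8)" using that eps by (intro mult_left_mono) auto
        moreover have "(sqrt \<eta> / \<epsilon> + K / \<eta>) * \<bar>x - y\<bar> \<le> (sqrt \<eta> / \<epsilon> + K / \<eta>) * L"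
          using that yL c1pos by (intro mult_left_mono) auto
        ultimately show ?thesis by linarith
      qed
      have sK: "sqrt \<eta> * L \<le> \<delta> / 4" by (rule setaL)
      have bdry: "\<epsilon> / sqrt (\<bar>E\<bar> + 1) * cmod (\<psi>1 p) \<ge> exp (- (1 / \<epsilon>) * (agmon L V E p + \<delta>))"
        if p: "p \<in> {0..L}" "a p = 0" "b p = 0" for p
      proof -
        have Gp: "G p = \<epsilon>\<^sup>2 * (cmod (\<psi>1 p))\<^sup>2"
          unfolding G_def using p by (simp add: cmod_power2 a1_def b1_def)
        have "G p / (\<bar>E\<bar> + 1) \<ge> c0 * exp (- (2 / \<epsilon> * \<bar>F p - F y\<bar> + (sqrt \<eta> / \<epsilon> + K / \<eta>) * \<bar>p - y\<bar>))"
        proof -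
          have "(\<bar>E\<bar> + 1) * \<eta> / ((1 + B0) * L) \<le> (1 + B0) * my / ((1 + B0) * L)"
            using myE B00 L_pos by (intro divide_right_mono) auto
          moreover have "c0 * (\<bar>E\<bar> + 1) = (\<bar>E\<bar> + 1) * \<eta> / ((1 + B0) * L)"
            unfolding c0_def by simp
          moreover have "(1 + B0) * my / ((1 + B0) * L) = my / L"
            using B00 by (simp del: times_divide_eq_left times_divide_eq_right)
          ultimately have "c0 * (\<bar>E\<bar> + 1) \<le> my / L" by simp
          also have "\<dots> \<le> G y" by (rule Gy)
          finally have "c0 * (\<bar>E\<bar> + 1) * exp (- (2 / \<epsilon> * \<bar>F p - F y\<bar> + (sqrt \<eta> / \<epsilon> + K / \<eta>) * \<bar>p - y\<bar>)) \<le> G p"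
            using coreG[OF p(1)] by (smt (verit) exp_gt_zero mult_right_mono)
          then show ?thesis by (simp add: field_simps)
        qed
        then have "G p / (\<bar>E\<bar> + 1) \<ge> exp (- (2 / \<epsilon>) * (agmon L V E p + \<delta>))"
          by (rule exp_final[OF eps(1) del c00 _ Xbd[OF p(1) agb[OF p(1)]] sK _ eC3])
             (simp add: C3_def K_def)
        then have "\<epsilon>\<^sup>2 * (cmod (\<psi>1 p))\<^sup>2 \<ge> (\<bar>E\<bar> + 1) * exp (2 * (- (1 / \<epsilon>) * (agmon L V E p + \<delta>)))"
          unfolding Gp by (simp add: field_simps)
        then show ?thesis by (rule bdry_conclude[OF eps(1) norm_ge_zero])
      qed
      show "L2norm ({y0 - \<delta><..<y0 + \<delta>} \<inter> {0..L}) \<psi> \<ge> exp (- (1 / \<epsilon>) * (agmon L V E y0 + D * \<delta>))"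
      proof -
        define U where "U = {y0 - \<delta><..<y0 + \<delta>} \<inter> {0..L}"
        define Qt where "Qt = \<bar>E\<bar> + Vabs + 2"
        have Qtb: "\<bar>W x - E\<bar> + 1 \<le> Qt" if "x \<in> {0..L}" for x
          using close[OF that] Vabs[OF that] tau1 unfolding Qt_def by linarith
        have fc: "continuous_on {0..L} (\<lambda>s. sqrt (max (W s - E) 0))" by (intro continuous_intros Wc)
        have fQ: "sqrt (max (W t - E) 0) \<le> sqrt Qp" if "t \<in> {0..L}" for t
        proof -
          have "W t - E \<le> Qp" using close[OF that] Vhi[OF that] Elow tau1 unfolding Qp_def by linarith
          then show ?thesis using Qp0 by (intro real_sqrt_le_mono) auto
        qed
        have Fy0: "\<bar>F x - F y0\<bar> \<le> sqrt Qp * \<delta>" if x: "x \<in> {s..s+len}" for x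
        proof -
          have xL: "x \<in> {0..L}" using x s0 by auto
          have "\<bar>F x - F y0\<bar> = integral {min y0 x..max y0 x} (\<lambda>s. sqrt (max (W s - E) 0))"
            unfolding F_def using prim_diff[OF fc _ y0 xL] by simp
          also have "\<dots> \<le> sqrt Qp * (max y0 x - min y0 x)"
          proof (rule integral_bound_const)
            have "{min y0 x..max y0 x} \<subseteq> {0..L}" using y0 xL by auto
            then show "continuous_on {min y0 x..max y0 x} (\<lambda>s. sqrt (max (W s - E) 0))"
              using continuous_on_subset[OF fc] by blast
            fix t assume "t \<in> {min y0 x..max y0 x}"
            then have "t \<in> {0..L}" using y0 xL by auto
            then show "sqrt (max (W t - E) 0) \<le> sqrt Qp" by (rule fQ)
          qed simp
          also have "\<dots> \<le> sqrt Qp * \<delta>"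
          proof -
            have "max y0 x - min y0 x \<le> \<delta>" using sy0[OF x] lenD by (auto simp: max_def min_def)
            then show ?thesis using Qp0 by (intro mult_left_mono) auto
          qed
          finally show ?thesis .
        qed
        define A where "A = agmon L V E y0 + sqrt Qp * \<delta>"
        define Xm where "Xm = 2 / \<epsilon> * (A + \<delta> / 8) + (sqrt \<eta> / \<epsilon> + K / \<eta>) * L"
        define \<gamma> where "\<gamma> = my / L * exp (- Xm)"
        have gam0: "\<gamma> \<ge> 0" unfolding \<gamma>_def using my_eta eta0 L_pos by simp
        have Gmin: "G x \<ge> \<gamma>" if x: "x \<in> {s..s+len}" for x
        proof -
          have xL: "x \<in> {0..L}" using x s0 by auto
          have "\<bar>F x - F y\<bar> \<le> \<bar>F x - F y0\<bar> + \<bar>F y0 - F y\<bar>" by linarith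
          then have "\<bar>F x - F y\<bar> \<le> A + \<delta> / 8" using Fy0[OF x] agb[OF y0] unfolding A_def by linarith
          from Xbd[OF xL this]
          have "exp (- Xm) \<le> exp (- (2 / \<epsilon> * \<bar>F x - F y\<bar> + (sqrt \<eta> / \<epsilon> + K / \<eta>) * \<bar>x - y\<bar>))"
            unfolding Xm_def by simp
          then have "my / L * exp (- Xm) \<le> G y * exp (- (2 / \<epsilon> * \<bar>F x - F y\<bar> + (sqrt \<eta> / \<epsilon> + K / \<eta>) * \<bar>x - y\<bar>))"
          proof -
            have "my / L \<ge> 0" using my_eta eta0 L_pos by simp
            then show ?thesis using Gy \<open>exp (- Xm) \<le> _\<close> by (intro mult_mono) auto
          qed
          then show ?thesis using coreG[OF xL] unfolding \<gamma>_def by linarith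
        qed
        have IJ: "integral {s..s+len} (\<lambda>x. (a x)\<^sup>2 + (b x)\<^sup>2) \<ge> len * \<gamma> / (2048 * Qt)"
          by (rule mass_J[OF eps(1) eta0 da db da1 db1 Qtb s0 len0 _ _ gam0])
             (use eps1 Gmin in \<open>auto simp: G_def\<close>)
        have Qt1: "Qt \<ge> 1" unfolding Qt_def using Vabs0 by simp
        have "len * \<gamma> / (2048 * Qt) \<ge> c0' * exp (- Xm)"
        proof -
          have "Qt \<le> (\<bar>E\<bar> + 1) * (Vabs + 2)" unfolding Qt_def using Vabs0
            by (simp add: algebra_simps)
          then have "\<eta> * Qt \<le> \<eta> * ((\<bar>E\<bar> + 1) * (Vabs + 2))" using eta0 by (intro mult_left_mono) auto
          also have "\<dots> = ((\<bar>E\<bar> + 1) * \<eta>) * (Vabs + 2)" by (simp add: algebra_simps)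
          also have "\<dots> \<le> ((1 + B0) * my) * (Vabs + 2)" using myE Vabs0 by (intro mult_right_mono) auto
          finally have key: "\<eta> * Qt \<le> (1 + B0) * my * (Vabs + 2)" .
          define X where "X = (1 + B0) * (Vabs + 2)"
          have X0: "X > 0" unfolding X_def using B00 Vabs0 by simp
          have "\<eta> / X = (\<eta> * Qt) / (X * Qt)" using Qt1 by simp
          also have "\<dots> \<le> (my * X) / (X * Qt)"
          proof (rule divide_right_mono)
            show "\<eta> * Qt \<le> my * X" using key unfolding X_def by (simp add: algebra_simps)
            show "0 \<le> X * Qt" using X0 Qt1 by simp
          qed
          also have "\<dots> = my / Qt" using X0 by simp
          finally have r: "\<eta> / X \<le> my / Qt" .
          have "c0' = len / (2048 * L) * (\<eta> / X)" unfolding c0'_def X_def by (simp add: mult.assoc)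
          also have "\<dots> \<le> len / (2048 * L) * (my / Qt)" using r len0 L_pos by (intro mult_left_mono) auto
          also have "\<dots> = len * my / (2048 * L * Qt)" by simp
          finally have "c0' * exp (- Xm) \<le> len * my / (2048 * L * Qt) * exp (- Xm)"
            by (intro mult_right_mono) auto
          also have "\<dots> = len * \<gamma> / (2048 * Qt)" unfolding \<gamma>_def by (simp add: field_simps)
          finally show ?thesis .
        qed
        with IJ have "integral {s..s+len} (\<lambda>x. (a x)\<^sup>2 + (b x)\<^sup>2) \<ge> c0' * exp (- Xm)" by linarith
        then have IJ2: "integral {s..s+len} (\<lambda>x. (a x)\<^sup>2 + (b x)\<^sup>2) \<ge> exp (- (2 / \<epsilon>) * (A + \<delta>))"
          by (rule exp_final[OF eps(1) del c0'0, where ka="K / \<eta>" and sa="sqrt \<eta>", OF _ _ sK _ eC4])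
             (simp_all add: Xm_def C4_def)
        have JU: "{s..s+len} \<subseteq> U"
        proof
          fix x assume x: "x \<in> {s..s+len}"
          then have "\<bar>x - y0\<bar> \<le> len" by (rule sy0)
          then have "y0 - \<delta> < x" "x < y0 + \<delta>" using lenD by (auto simp: abs_le_iff)
          then show "x \<in> U" unfolding U_def using x s0 by auto
        qed
        have UL: "U \<subseteq> {0..L}" unfolding U_def by auto
        have Uset: "U \<in> sets lebesgue" unfolding U_def by auto
        have PU: "set_integrable lebesgue U (\<lambda>x. (cmod (\<psi> x))\<^sup>2)"
          by (rule set_integrable_subset[OF Pint Uset UL])
        have "integral {s..s+len} (\<lambda>x. (cmod (\<psi> x))\<^sup>2) \<le> integral U (\<lambda>x. (cmod (\<psi> x))\<^sup>2)"
        proof (rule integral_subset_le[OF JU])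
          show "(\<lambda>x. (cmod (\<psi> x))\<^sup>2) integrable_on {s..s+len}"
            using s0 by (intro integrable_continuous_real continuous_on_subset[OF Pc]) auto
          show "(\<lambda>x. (cmod (\<psi> x))\<^sup>2) integrable_on U" by (rule set_lebesgue_integral_eq_integral(1)[OF PU])
        qed simp
        then have "(LINT x:U|lebesgue. (cmod (\<psi> x))\<^sup>2) \<ge> exp (- (2 / \<epsilon>) * (A + \<delta>))"
          using IJ2 set_lebesgue_integral_eq_integral(2)[OF PU] by (simp add: cm2)
        then have s1: "sqrt (LINT x:U|lebesgue. (cmod (\<psi> x))\<^sup>2) \<ge> sqrt (exp (- (2 / \<epsilon>) * (A + \<delta>)))"
          by (rule real_sqrt_le_mono)
        have s2: "sqrt (exp (- (2 / \<epsilon>) * (A + \<delta>))) = exp (- (1 / \<epsilon>) * (agmon L V E y0 + D * \<delta>))"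
        proof -
          have "- (2 / \<epsilon>) * (A + \<delta>) = 2 * (- (1 / \<epsilon>) * (agmon L V E y0 + D * \<delta>))"
            unfolding A_def D_def by (simp add: algebra_simps)
          then show ?thesis by (simp only: exp_double real_sqrt_abs) simp
        qed
        show ?thesis using s1 s2 unfolding L2norm_def U_def by linarith
      qed
      show "\<epsilon> / sqrt (\<bar>E\<bar> + 1) * cmod (\<psi>1 0) \<ge> exp (- (1 / \<epsilon>) * (agmon L V E 0 + \<delta>))"
        by (rule bdry) (use a0 L_pos in auto)
      show "\<epsilon> / sqrt (\<bar>E\<bar> + 1) * cmod (\<psi>1 L) \<ge> exp (- (1 / \<epsilon>) * (agmon L V E L + \<delta>))"
        by (rule bdry) (use a0 L_pos in auto)
    qed
  qed
qed

end
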